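(* In the category $\mathbf{Lens}$, the class of all morphisms that are left orthogonal to every monomorphism is exactly the class of all epimorphisms.
   Context: A lens $F\colon \mathbf{A}\to\mathbf{B}$ between small categories consists of a functor $F\colon\mathbf{A}\to\mathbf{B}$ (the get functor) together with, for each object $A$ of $\mathbf{A}$, a function $\varphi_{F,A}$ from the set of morphisms of $\mathbf{B}$ with domain $FA$ to the set of morphisms of $\mathbf{A}$ with domain $A$, such that: $F(\varphi_{F,A}b)=b$; $\varphi_{F,A}(\mathrm{id}_{FA})=\mathrm{id}_A$; and $\varphi_{F,A}(b'\circ b)=\varphi_{F,A'}(b')\circ\varphi_{F,A}(b)$ whenever $b$ has domain $FA$, $A'$ is the codomain of $\varphi_{F,A}b$, and $b'$ has domain $FA'$. $\mathbf{Lens}$ is the category of small categories and lenses, with composite of $F\colon\mathbf{A}\to\mathbf{B}$, $G\colon\mathbf{B}\to\mathbf{C}$ having get functor $G\circ F$ and puts $\varphi_{G\circ F,A}(c)=\varphi_{F,A}(\varphi_{G,FA}(c))$. A morphism $e\colon A\to B$ is left orthogonal to $m\colon C\to D$ if for all $f\colon A\to C$ and $g\colon B\to D$ with $g\circ e=m\circ f$ there is a unique $h\colon B\to C$ with $h\circ e=f$ and $m\circ h=g$. *)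

theory Defs
  imports Main
begin

text \<open>Small categories: all objects and arrows live in a fixed universe type 'u
  (playing the role of a Grothendieck universe).  Categories and lenses are
  represented extensionally (all data is undefined outside the carriers), so that
  HOL equality is equality of categories / lenses.\<close>

record 'u cat =
  Obj  :: "'u set"
  Arr  :: "'u set"
  Dom  :: "'u \<Rightarrow> 'u"
  Cod  :: "'u \<Rightarrow> 'u"
  Idn  :: "'u \<Rightarrow> 'u"
  Comp :: "'u \<Rightarrow> 'u \<Rightarrow> 'u"   (* Comp C g f = g \<circ> f *)

definition category :: "'u cat \<Rightarrow> bool" where
  "category C \<longleftrightarrow>
     (\<forall>f\<in>Arr C. Dom C f \<in> Obj C \<and> Cod C f \<in> Obj C) \<and>
     (\<forall>x\<in>Obj C. Idn C x \<in> Arr C \<and> Dom C (Idn C x) = x \<and> Cod C (Idn C x) = x) \<and>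
     (\<forall>f\<in>Arr C. \<forall>g\<in>Arr C. Cod C f = Dom C g \<longrightarrow>
         Comp C g f \<in> Arr C \<and> Dom C (Comp C g f) = Dom C f \<and> Cod C (Comp C g f) = Cod C g) \<and>
     (\<forall>f\<in>Arr C. Comp C (Idn C (Cod C f)) f = f \<and> Comp C f (Idn C (Dom C f)) = f) \<and>
     (\<forall>f\<in>Arr C. \<forall>g\<in>Arr C. \<forall>h\<in>Arr C. Cod C f = Dom C g \<and> Cod C g = Dom C h \<longrightarrow>
         Comp C h (Comp C g f) = Comp C (Comp C h g) f) \<and>
     (\<forall>f. f \<notin> Arr C \<longrightarrow> Dom C f = undefined \<and> Cod C f = undefined) \<and>
     (\<forall>x. x \<notin> Obj C \<longrightarrow> Idn C x = undefined) \<and>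
     (\<forall>f g. \<not> (f \<in> Arr C \<and> g \<in> Arr C \<and> Cod C f = Dom C g) \<longrightarrow> Comp C g f = undefined)"

text \<open>A lens: get functor (FO on objects, FA on arrows) and put functions
  Put A b = \<phi>_{F,A}(b).\<close>

record 'u lens =
  Src :: "'u cat"
  Tgt :: "'u cat"
  FO  :: "'u \<Rightarrow> 'u"
  FA  :: "'u \<Rightarrow> 'u"
  Put :: "'u \<Rightarrow> 'u \<Rightarrow> 'u"

definition is_lens :: "'u lens \<Rightarrow> bool" where
  "is_lens L \<longleftrightarrow>
     (let A = Src L; B = Tgt L in
       category A \<and> category B \<and>
       \<comment> \<open>get is a functor\<close>
       (\<forall>x\<in>Obj A. FO L x \<in> Obj B) \<and>
       (\<forall>f\<in>Arr A. FA L f \<in> Arr B \<and> Dom B (FA L f) = FO L (Dom A f) \<and> Cod B (FA L f) = FO L (Cod A f)) \<and>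
       (\<forall>x\<in>Obj A. FA L (Idn A x) = Idn B (FO L x)) \<and>
       (\<forall>f\<in>Arr A. \<forall>g\<in>Arr A. Cod A f = Dom A g \<longrightarrow> FA L (Comp A g f) = Comp B (FA L g) (FA L f)) \<and>
       \<comment> \<open>put\<close>
       (\<forall>x\<in>Obj A. \<forall>b\<in>Arr B. Dom B b = FO L x \<longrightarrow>
          Put L x b \<in> Arr A \<and> Dom A (Put L x b) = x \<and> FA L (Put L x b) = b) \<and>
       (\<forall>x\<in>Obj A. Put L x (Idn B (FO L x)) = Idn A x) \<and>
       (\<forall>x\<in>Obj A. \<forall>b\<in>Arr B. \<forall>b'\<in>Arr B. Dom B b = FO L x \<and> Dom B b' = FO L (Cod A (Put L x b)) \<longrightarrow>
          Put L x (Comp B b' b) = Comp A (Put L (Cod A (Put L x b)) b') (Put L x b)) \<and>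
       \<comment> \<open>extensionality\<close>
       (\<forall>x. x \<notin> Obj A \<longrightarrow> FO L x = undefined) \<and>
       (\<forall>f. f \<notin> Arr A \<longrightarrow> FA L f = undefined) \<and>
       (\<forall>x b. \<not> (x \<in> Obj A \<and> b \<in> Arr B \<and> Dom B b = FO L x) \<longrightarrow> Put L x b = undefined))"

definition lcomp :: "'u lens \<Rightarrow> 'u lens \<Rightarrow> 'u lens" where
  "lcomp G F =
     \<lparr> Src = Src F, Tgt = Tgt G,
       FO = (\<lambda>x. if x \<in> Obj (Src F) then FO G (FO F x) else undefined),
       FA = (\<lambda>f. if f \<in> Arr (Src F) then FA G (FA F f) else undefined),
       Put = (\<lambda>x c. if x \<in> Obj (Src F) \<and> c \<in> Arr (Tgt G) \<and> Dom (Tgt G) c = FO G (FO F x)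
                     then Put F x (Put G (FO F x) c) else undefined) \<rparr>"

definition lens_mono :: "'u lens \<Rightarrow> bool" where
  "lens_mono m \<longleftrightarrow> is_lens m \<and>
     (\<forall>f g. is_lens f \<and> is_lens g \<and> Src f = Src g \<and> Tgt f = Src m \<and> Tgt g = Src m \<and>
            lcomp m f = lcomp m g \<longrightarrow> f = g)"

definition lens_epi :: "'u lens \<Rightarrow> bool" where
  "lens_epi e \<longleftrightarrow> is_lens e \<and>
     (\<forall>f g. is_lens f \<and> is_lens g \<and> Src f = Tgt e \<and> Src g = Tgt e \<and> Tgt f = Tgt g \<and>
            lcomp f e = lcomp g e \<longrightarrow> f = g)"

definition left_orth :: "'u lens \<Rightarrow> 'u lens \<Rightarrow> bool" where
  "left_orth e m \<longleftrightarrow> is_lens e \<and> is_lens m \<and>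
     (\<forall>f g. is_lens f \<and> is_lens g \<and> Src f = Src e \<and> Tgt f = Src m \<and>
            Src g = Tgt e \<and> Tgt g = Tgt m \<and> lcomp g e = lcomp m f \<longrightarrow>
        (\<exists>!h. is_lens h \<and> Src h = Tgt e \<and> Tgt h = Src m \<and> lcomp h e = f \<and> lcomp m h = g))"

end

theory Submission
  imports Defs
begin


lemma inj_pair_exists:
  assumes "infinite (UNIV :: 'u set)"
  shows "\<exists>i :: 'u \<times> 'u \<Rightarrow> 'u. inj i"
proof -
  have "\<exists>f. bij_betw f (UNIV \<times> UNIV :: ('u \<times> 'u) set) (UNIV :: 'u set)"
    using card_of_Times_same_infinite[OF assms] card_of_ordIso by blast
  then show ?thesis by (auto simp: bij_betw_def)
qed

lemma cat_ax0: "category C \<Longrightarrow> (\<forall>f\<in>Arr C. Dom C f \<in> Obj C \<and> Cod C f \<in> Obj C)"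
  unfolding category_def by (elim conjE) assumption

lemma cat_ax1: "category C \<Longrightarrow> (\<forall>x\<in>Obj C. Idn C x \<in> Arr C \<and> Dom C (Idn C x) = x \<and> Cod C (Idn C x) = x)"
  unfolding category_def by (elim conjE) assumption

lemma cat_ax2: "category C \<Longrightarrow> (\<forall>f\<in>Arr C. \<forall>g\<in>Arr C. Cod C f = Dom C g \<longrightarrow>
         Comp C g f \<in> Arr C \<and> Dom C (Comp C g f) = Dom C f \<and> Cod C (Comp C g f) = Cod C g)"
  unfolding category_def by (elim conjE) assumption

lemma cat_ax3: "category C \<Longrightarrow> (\<forall>f\<in>Arr C. Comp C (Idn C (Cod C f)) f = f \<and> Comp C f (Idn C (Dom C f)) = f)"
  unfolding category_def by (elim conjE) assumption

lemma cat_ax4: "category C \<Longrightarrow> (\<forall>f\<in>Arr C. \<forall>g\<in>Arr C. \<forall>h\<in>Arr C. Cod C f = Dom C g \<and> Cod C g = Dom C h \<longrightarrow>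
         Comp C h (Comp C g f) = Comp C (Comp C h g) f)"
  unfolding category_def by (elim conjE) assumption

lemma cat_ax5: "category C \<Longrightarrow> (\<forall>f. f \<notin> Arr C \<longrightarrow> Dom C f = undefined \<and> Cod C f = undefined)"
  unfolding category_def by (elim conjE) assumption

lemma cat_ax6: "category C \<Longrightarrow> (\<forall>x. x \<notin> Obj C \<longrightarrow> Idn C x = undefined)"
  unfolding category_def by (elim conjE) assumption

lemma cat_ax7: "category C \<Longrightarrow> (\<forall>f g. \<not> (f \<in> Arr C \<and> g \<in> Arr C \<and> Cod C f = Dom C g) \<longrightarrow> Comp C g f = undefined)"
  unfolding category_def by (elim conjE) assumption

lemma lens_ax0: "is_lens L \<Longrightarrow> category (Src L) \<and> category (Tgt L)"
  unfolding is_lens_def Let_def by (elim conjE) (rule conjI)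

lemma lens_ax1: "is_lens L \<Longrightarrow> (\<forall>x\<in>Obj (Src L). FO L x \<in> Obj (Tgt L))"
  unfolding is_lens_def Let_def by (elim conjE) assumption

lemma lens_ax2: "is_lens L \<Longrightarrow> (\<forall>f\<in>Arr (Src L). FA L f \<in> Arr (Tgt L) \<and> Dom (Tgt L) (FA L f) = FO L (Dom (Src L) f) \<and> Cod (Tgt L) (FA L f) = FO L (Cod (Src L) f))"
  unfolding is_lens_def Let_def by (elim conjE) assumption

lemma lens_ax3: "is_lens L \<Longrightarrow> (\<forall>x\<in>Obj (Src L). FA L (Idn (Src L) x) = Idn (Tgt L) (FO L x))"
  unfolding is_lens_def Let_def by (elim conjE) assumption

lemma lens_ax4: "is_lens L \<Longrightarrow> (\<forall>f\<in>Arr (Src L). \<forall>g\<in>Arr (Src L). Cod (Src L) f = Dom (Src L) g \<longrightarrow> FA L (Comp (Src L) g f) = Comp (Tgt L) (FA L g) (FA L f))"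
  unfolding is_lens_def Let_def by (elim conjE) assumption

lemma lens_ax5: "is_lens L \<Longrightarrow> (\<forall>x\<in>Obj (Src L). \<forall>b\<in>Arr (Tgt L). Dom (Tgt L) b = FO L x \<longrightarrow>
          Put L x b \<in> Arr (Src L) \<and> Dom (Src L) (Put L x b) = x \<and> FA L (Put L x b) = b)"
  unfolding is_lens_def Let_def by (elim conjE) assumption

lemma lens_ax6: "is_lens L \<Longrightarrow> (\<forall>x\<in>Obj (Src L). Put L x (Idn (Tgt L) (FO L x)) = Idn (Src L) x)"
  unfolding is_lens_def Let_def by (elim conjE) assumption

lemma lens_ax7: "is_lens L \<Longrightarrow> (\<forall>x\<in>Obj (Src L). \<forall>b\<in>Arr (Tgt L). \<forall>b'\<in>Arr (Tgt L). Dom (Tgt L) b = FO L x \<and> Dom (Tgt L) b' = FO L (Cod (Src L) (Put L x b)) \<longrightarrow>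
          Put L x (Comp (Tgt L) b' b) = Comp (Src L) (Put L (Cod (Src L) (Put L x b)) b') (Put L x b))"
  unfolding is_lens_def Let_def by (elim conjE) assumption

lemma lens_ax8: "is_lens L \<Longrightarrow> (\<forall>x. x \<notin> Obj (Src L) \<longrightarrow> FO L x = undefined)"
  unfolding is_lens_def Let_def by (elim conjE) assumption

lemma lens_ax9: "is_lens L \<Longrightarrow> (\<forall>f. f \<notin> Arr (Src L) \<longrightarrow> FA L f = undefined)"
  unfolding is_lens_def Let_def by (elim conjE) assumption

lemma lens_ax10: "is_lens L \<Longrightarrow> (\<forall>x b. \<not> (x \<in> Obj (Src L) \<and> b \<in> Arr (Tgt L) \<and> Dom (Tgt L) b = FO L x) \<longrightarrow> Put L x b = undefined)"
  unfolding is_lens_def Let_def by (elim conjE) assumption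


lemma cat_dom: "category C \<Longrightarrow> f \<in> Arr C \<Longrightarrow> Dom C f \<in> Obj C"
  using cat_ax0[of C] cat_ax1[of C] cat_ax2[of C] cat_ax3[of C] cat_ax4[of C] by blast
lemma cat_cod: "category C \<Longrightarrow> f \<in> Arr C \<Longrightarrow> Cod C f \<in> Obj C"
  using cat_ax0[of C] cat_ax1[of C] cat_ax2[of C] cat_ax3[of C] cat_ax4[of C] by blast
lemma cat_idn: "category C \<Longrightarrow> x \<in> Obj C \<Longrightarrow> Idn C x \<in> Arr C"
  using cat_ax0[of C] cat_ax1[of C] cat_ax2[of C] cat_ax3[of C] cat_ax4[of C] by blast
lemma cat_idn_dom: "category C \<Longrightarrow> x \<in> Obj C \<Longrightarrow> Dom C (Idn C x) = x"
  using cat_ax0[of C] cat_ax1[of C] cat_ax2[of C] cat_ax3[of C] cat_ax4[of C] by blast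
lemma cat_idn_cod: "category C \<Longrightarrow> x \<in> Obj C \<Longrightarrow> Cod C (Idn C x) = x"
  using cat_ax0[of C] cat_ax1[of C] cat_ax2[of C] cat_ax3[of C] cat_ax4[of C] by blast
lemma cat_comp: "category C \<Longrightarrow> f \<in> Arr C \<Longrightarrow> g \<in> Arr C \<Longrightarrow> Cod C f = Dom C g \<Longrightarrow> Comp C g f \<in> Arr C"
  using cat_ax0[of C] cat_ax1[of C] cat_ax2[of C] cat_ax3[of C] cat_ax4[of C] by blast
lemma cat_comp_dom: "category C \<Longrightarrow> f \<in> Arr C \<Longrightarrow> g \<in> Arr C \<Longrightarrow> Cod C f = Dom C g \<Longrightarrow> Dom C (Comp C g f) = Dom C f"
  using cat_ax0[of C] cat_ax1[of C] cat_ax2[of C] cat_ax3[of C] cat_ax4[of C] by blast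
lemma cat_comp_cod: "category C \<Longrightarrow> f \<in> Arr C \<Longrightarrow> g \<in> Arr C \<Longrightarrow> Cod C f = Dom C g \<Longrightarrow> Cod C (Comp C g f) = Cod C g"
  using cat_ax0[of C] cat_ax1[of C] cat_ax2[of C] cat_ax3[of C] cat_ax4[of C] by blast
lemma cat_idl: "category C \<Longrightarrow> f \<in> Arr C \<Longrightarrow> Comp C (Idn C (Cod C f)) f = f"
  using cat_ax0[of C] cat_ax1[of C] cat_ax2[of C] cat_ax3[of C] cat_ax4[of C] by blast
lemma cat_idr: "category C \<Longrightarrow> f \<in> Arr C \<Longrightarrow> Comp C f (Idn C (Dom C f)) = f"
  using cat_ax0[of C] cat_ax1[of C] cat_ax2[of C] cat_ax3[of C] cat_ax4[of C] by blast
lemma cat_assoc: "category C \<Longrightarrow> f \<in> Arr C \<Longrightarrow> g \<in> Arr C \<Longrightarrow> h \<in> Arr C \<Longrightarrow> Cod C f = Dom C g \<Longrightarrow> Cod C g = Dom C h \<Longrightarrow>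
   Comp C h (Comp C g f) = Comp C (Comp C h g) f"
  using cat_ax0[of C] cat_ax1[of C] cat_ax2[of C] cat_ax3[of C] cat_ax4[of C] by blast

lemmas cat_simps = cat_dom cat_cod cat_idn cat_idn_dom cat_idn_cod cat_comp cat_comp_dom cat_comp_cod cat_idl cat_idr


lemma categoryI:
  assumes "\<And>f. f \<in> Arr C \<Longrightarrow> Dom C f \<in> Obj C" "\<And>f. f \<in> Arr C \<Longrightarrow> Cod C f \<in> Obj C"
    "\<And>x. x \<in> Obj C \<Longrightarrow> Idn C x \<in> Arr C" "\<And>x. x \<in> Obj C \<Longrightarrow> Dom C (Idn C x) = x"
    "\<And>x. x \<in> Obj C \<Longrightarrow> Cod C (Idn C x) = x"
    "\<And>f g. f \<in> Arr C \<Longrightarrow> g \<in> Arr C \<Longrightarrow> Cod C f = Dom C g \<Longrightarrow> Comp C g f \<in> Arr C"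
    "\<And>f g. f \<in> Arr C \<Longrightarrow> g \<in> Arr C \<Longrightarrow> Cod C f = Dom C g \<Longrightarrow> Dom C (Comp C g f) = Dom C f"
    "\<And>f g. f \<in> Arr C \<Longrightarrow> g \<in> Arr C \<Longrightarrow> Cod C f = Dom C g \<Longrightarrow> Cod C (Comp C g f) = Cod C g"
    "\<And>f. f \<in> Arr C \<Longrightarrow> Comp C (Idn C (Cod C f)) f = f"
    "\<And>f. f \<in> Arr C \<Longrightarrow> Comp C f (Idn C (Dom C f)) = f"
    "\<And>f g h. f \<in> Arr C \<Longrightarrow> g \<in> Arr C \<Longrightarrow> h \<in> Arr C \<Longrightarrow> Cod C f = Dom C g \<Longrightarrow> Cod C g = Dom C h \<Longrightarrow>
       Comp C h (Comp C g f) = Comp C (Comp C h g) f"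
    "\<And>f. f \<notin> Arr C \<Longrightarrow> Dom C f = undefined" "\<And>f. f \<notin> Arr C \<Longrightarrow> Cod C f = undefined"
    "\<And>x. x \<notin> Obj C \<Longrightarrow> Idn C x = undefined"
    "\<And>f g. \<not> (f \<in> Arr C \<and> g \<in> Arr C \<and> Cod C f = Dom C g) \<Longrightarrow> Comp C g f = undefined"
  shows "category C"
  unfolding category_def
  apply (intro conjI ballI allI impI)
  using assms by simp_all

lemma lens_src: "is_lens L \<Longrightarrow> category (Src L)"
  using lens_ax0[of L] by blast
lemma lens_tgt: "is_lens L \<Longrightarrow> category (Tgt L)"
  using lens_ax0[of L] by blast
lemma lens_FO: "is_lens L \<Longrightarrow> x \<in> Obj (Src L) \<Longrightarrow> FO L x \<in> Obj (Tgt L)"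
  using lens_ax1[of L] by blast
lemma lens_FA: "is_lens L \<Longrightarrow> f \<in> Arr (Src L) \<Longrightarrow> FA L f \<in> Arr (Tgt L)"
  using lens_ax2[of L] by blast
lemma lens_FA_dom: "is_lens L \<Longrightarrow> f \<in> Arr (Src L) \<Longrightarrow> Dom (Tgt L) (FA L f) = FO L (Dom (Src L) f)"
  using lens_ax2[of L] by blast
lemma lens_FA_cod: "is_lens L \<Longrightarrow> f \<in> Arr (Src L) \<Longrightarrow> Cod (Tgt L) (FA L f) = FO L (Cod (Src L) f)"
  using lens_ax2[of L] by blast
lemma lens_FA_idn: "is_lens L \<Longrightarrow> x \<in> Obj (Src L) \<Longrightarrow> FA L (Idn (Src L) x) = Idn (Tgt L) (FO L x)"
  using lens_ax3[of L] by blast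
lemma lens_FA_comp: "is_lens L \<Longrightarrow> f \<in> Arr (Src L) \<Longrightarrow> g \<in> Arr (Src L) \<Longrightarrow> Cod (Src L) f = Dom (Src L) g \<Longrightarrow>
   FA L (Comp (Src L) g f) = Comp (Tgt L) (FA L g) (FA L f)"
proof -
  assume a: "is_lens L" "f \<in> Arr (Src L)" "g \<in> Arr (Src L)" "Cod (Src L) f = Dom (Src L) g"
  have "\<forall>f\<in>Arr (Src L). \<forall>g\<in>Arr (Src L). Cod (Src L) f = Dom (Src L) g \<longrightarrow> FA L (Comp (Src L) g f) = Comp (Tgt L) (FA L g) (FA L f)"
    using a(1) unfolding is_lens_def Let_def by (elim conjE) assumption
  then show ?thesis using a by blast
qed
lemma lens_Put: "is_lens L \<Longrightarrow> x \<in> Obj (Src L) \<Longrightarrow> b \<in> Arr (Tgt L) \<Longrightarrow> Dom (Tgt L) b = FO L x \<Longrightarrow> Put L x b \<in> Arr (Src L)"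
  using lens_ax5[of L] by blast
lemma lens_Put_dom: "is_lens L \<Longrightarrow> x \<in> Obj (Src L) \<Longrightarrow> b \<in> Arr (Tgt L) \<Longrightarrow> Dom (Tgt L) b = FO L x \<Longrightarrow> Dom (Src L) (Put L x b) = x"
  using lens_ax5[of L] by blast
lemma lens_FA_Put: "is_lens L \<Longrightarrow> x \<in> Obj (Src L) \<Longrightarrow> b \<in> Arr (Tgt L) \<Longrightarrow> Dom (Tgt L) b = FO L x \<Longrightarrow> FA L (Put L x b) = b"
  using lens_ax5[of L] by blast
lemma lens_Put_idn: "is_lens L \<Longrightarrow> x \<in> Obj (Src L) \<Longrightarrow> Put L x (Idn (Tgt L) (FO L x)) = Idn (Src L) x"
  using lens_ax6[of L] by blast
lemma lens_Put_comp: "is_lens L \<Longrightarrow> x \<in> Obj (Src L) \<Longrightarrow> b \<in> Arr (Tgt L) \<Longrightarrow> b' \<in> Arr (Tgt L) \<Longrightarrow>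
   Dom (Tgt L) b = FO L x \<Longrightarrow> Dom (Tgt L) b' = FO L (Cod (Src L) (Put L x b)) \<Longrightarrow>
   Put L x (Comp (Tgt L) b' b) = Comp (Src L) (Put L (Cod (Src L) (Put L x b)) b') (Put L x b)"
  using lens_ax7[of L] by blast
lemma lens_FO_ext: "is_lens L \<Longrightarrow> x \<notin> Obj (Src L) \<Longrightarrow> FO L x = undefined"
  using lens_ax8[of L] by blast
lemma lens_FA_ext: "is_lens L \<Longrightarrow> f \<notin> Arr (Src L) \<Longrightarrow> FA L f = undefined"
  using lens_ax9[of L] by blast
lemma lens_Put_ext: "is_lens L \<Longrightarrow> \<not> (x \<in> Obj (Src L) \<and> b \<in> Arr (Tgt L) \<and> Dom (Tgt L) b = FO L x) \<Longrightarrow> Put L x b = undefined"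
proof -
  assume a: "is_lens L" "\<not> (x \<in> Obj (Src L) \<and> b \<in> Arr (Tgt L) \<and> Dom (Tgt L) b = FO L x)"
  have "\<forall>x b. \<not> (x \<in> Obj (Src L) \<and> b \<in> Arr (Tgt L) \<and> Dom (Tgt L) b = FO L x) \<longrightarrow> Put L x b = undefined"
    using a(1) unfolding is_lens_def Let_def by (elim conjE) assumption
  then show ?thesis using a by blast
qed

lemma lensI:
  assumes "category (Src L)" "category (Tgt L)"
    "\<And>x. x \<in> Obj (Src L) \<Longrightarrow> FO L x \<in> Obj (Tgt L)"
    "\<And>f. f \<in> Arr (Src L) \<Longrightarrow> FA L f \<in> Arr (Tgt L)"
    "\<And>f. f \<in> Arr (Src L) \<Longrightarrow> Dom (Tgt L) (FA L f) = FO L (Dom (Src L) f)"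
    "\<And>f. f \<in> Arr (Src L) \<Longrightarrow> Cod (Tgt L) (FA L f) = FO L (Cod (Src L) f)"
    "\<And>x. x \<in> Obj (Src L) \<Longrightarrow> FA L (Idn (Src L) x) = Idn (Tgt L) (FO L x)"
    "\<And>f g. f \<in> Arr (Src L) \<Longrightarrow> g \<in> Arr (Src L) \<Longrightarrow> Cod (Src L) f = Dom (Src L) g \<Longrightarrow>
       FA L (Comp (Src L) g f) = Comp (Tgt L) (FA L g) (FA L f)"
    "\<And>x b. x \<in> Obj (Src L) \<Longrightarrow> b \<in> Arr (Tgt L) \<Longrightarrow> Dom (Tgt L) b = FO L x \<Longrightarrow> Put L x b \<in> Arr (Src L)"
    "\<And>x b. x \<in> Obj (Src L) \<Longrightarrow> b \<in> Arr (Tgt L) \<Longrightarrow> Dom (Tgt L) b = FO L x \<Longrightarrow> Dom (Src L) (Put L x b) = x"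
    "\<And>x b. x \<in> Obj (Src L) \<Longrightarrow> b \<in> Arr (Tgt L) \<Longrightarrow> Dom (Tgt L) b = FO L x \<Longrightarrow> FA L (Put L x b) = b"
    "\<And>x. x \<in> Obj (Src L) \<Longrightarrow> Put L x (Idn (Tgt L) (FO L x)) = Idn (Src L) x"
    "\<And>x b b'. x \<in> Obj (Src L) \<Longrightarrow> b \<in> Arr (Tgt L) \<Longrightarrow> b' \<in> Arr (Tgt L) \<Longrightarrow>
       Dom (Tgt L) b = FO L x \<Longrightarrow> Dom (Tgt L) b' = FO L (Cod (Src L) (Put L x b)) \<Longrightarrow>
       Put L x (Comp (Tgt L) b' b) = Comp (Src L) (Put L (Cod (Src L) (Put L x b)) b') (Put L x b)"
    "\<And>x. x \<notin> Obj (Src L) \<Longrightarrow> FO L x = undefined"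
    "\<And>f. f \<notin> Arr (Src L) \<Longrightarrow> FA L f = undefined"
    "\<And>x b. \<not> (x \<in> Obj (Src L) \<and> b \<in> Arr (Tgt L) \<and> Dom (Tgt L) b = FO L x) \<Longrightarrow> Put L x b = undefined"
  shows "is_lens L"
  unfolding is_lens_def Let_def
  apply (intro conjI ballI allI impI)
  using assms by simp_all

lemma lens_eqI:
  fixes L L' :: "'u lens"
  assumes "Src L = Src L'" "Tgt L = Tgt L'" "\<And>x. FO L x = FO L' x" "\<And>f. FA L f = FA L' f"
    "\<And>x b. Put L x b = Put L' x b"
  shows "L = L'"
  using assms by (intro lens.equality) (simp_all add: fun_eq_iff)

lemma lcomp_simps[simp]:
  "Src (lcomp G F) = Src F" "Tgt (lcomp G F) = Tgt G"
  "FO (lcomp G F) x = (if x \<in> Obj (Src F) then FO G (FO F x) else undefined)"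
  "FA (lcomp G F) f = (if f \<in> Arr (Src F) then FA G (FA F f) else undefined)"
  "Put (lcomp G F) x c = (if x \<in> Obj (Src F) \<and> c \<in> Arr (Tgt G) \<and> Dom (Tgt G) c = FO G (FO F x)
                     then Put F x (Put G (FO F x) c) else undefined)"
  by (simp_all add: lcomp_def)



lemma surj_epi:
  assumes e: "is_lens e" and su: "FO e ` Obj (Src e) = Obj (Tgt e)"
  shows "lens_epi e"
  unfolding lens_epi_def
proof (intro conjI allI impI)
  show "is_lens e" by fact
  fix f g
  assume H: "is_lens f \<and> is_lens g \<and> Src f = Tgt e \<and> Src g = Tgt e \<and> Tgt f = Tgt g \<and> lcomp f e = lcomp g e"
  then have f: "is_lens f" and g: "is_lens g" and sf: "Src f = Tgt e" and sg: "Src g = Tgt e"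
    and tt: "Tgt f = Tgt g" and eq: "lcomp f e = lcomp g e" by auto
  have FOeq: "FO f y = FO g y" for y
  proof (cases "y \<in> Obj (Tgt e)")
    case True
    then obtain x where x: "x \<in> Obj (Src e)" "y = FO e x" using su by auto
    have "FO (lcomp f e) x = FO (lcomp g e) x" using eq by simp
    then show ?thesis using x by simp
  next
    case False
    then show ?thesis using lens_FO_ext[OF f] lens_FO_ext[OF g] sf sg by simp
  qed
  have FAeq: "FA f u = FA g u" for u
  proof (cases "u \<in> Arr (Tgt e)")
    case True
    have "Dom (Tgt e) u \<in> Obj (Tgt e)" using True cat_dom[OF lens_tgt[OF e]] by blast
    then obtain x where x: "x \<in> Obj (Src e)" "Dom (Tgt e) u = FO e x" using su by force
    let ?p = "Put e x u"
    have p: "?p \<in> Arr (Src e)" "FA e ?p = u" using lens_Put[OF e x(1) True] lens_FA_Put[OF e x(1) True] x(2) by auto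
    have "FA (lcomp f e) ?p = FA (lcomp g e) ?p" using eq by simp
    then show ?thesis using p by simp
  next
    case False
    then show ?thesis using lens_FA_ext[OF f] lens_FA_ext[OF g] sf sg by simp
  qed
  have Puteq: "Put f y c = Put g y c" for y c
  proof (cases "y \<in> Obj (Tgt e) \<and> c \<in> Arr (Tgt f) \<and> Dom (Tgt f) c = FO f y")
    case True
    then obtain x where x: "x \<in> Obj (Src e)" "y = FO e x" using su by auto
    have pf: "Put f y c \<in> Arr (Tgt e)" "Dom (Tgt e) (Put f y c) = y"
      using lens_Put[OF f, of y c] lens_Put_dom[OF f, of y c] True sf by auto
    have pg: "Put g y c \<in> Arr (Tgt e)" "Dom (Tgt e) (Put g y c) = y"
      using lens_Put[OF g, of y c] lens_Put_dom[OF g, of y c] True sg tt FOeq by auto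
    have "Put (lcomp f e) x c = Put (lcomp g e) x c" using eq by simp
    then have "Put e x (Put f y c) = Put e x (Put g y c)" using True x tt FOeq by simp
    then have "FA e (Put e x (Put f y c)) = FA e (Put e x (Put g y c))" by simp
    then show ?thesis using lens_FA_Put[OF e x(1)] pf pg x(2) by simp
  next
    case False
    then show ?thesis using lens_Put_ext[OF f] lens_Put_ext[OF g] sf sg tt FOeq by metis
  qed
  show "f = g" by (rule lens_eqI) (use sf sg tt FOeq FAeq Puteq in auto)
qed

lemma inj_obj:
  assumes m: "is_lens m" and i: "inj_on (FA m) (Arr (Src m))"
    and x: "x \<in> Obj (Src m)" and y: "y \<in> Obj (Src m)" and eq: "FO m x = FO m y"
  shows "x = y"
proof -
  have "FA m (Idn (Src m) x) = FA m (Idn (Src m) y)" using lens_FA_idn[OF m] x y eq by simp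
  then have "Idn (Src m) x = Idn (Src m) y" using i cat_idn[OF lens_src[OF m]] x y by (auto dest: inj_onD)
  then show ?thesis using cat_idn_dom[OF lens_src[OF m]] x y by metis
qed

lemma inj_put:
  assumes m: "is_lens m" and i: "inj_on (FA m) (Arr (Src m))"
    and k: "k \<in> Arr (Src m)"
  shows "Put m (Dom (Src m) k) (FA m k) = k"
proof -
  have d: "Dom (Src m) k \<in> Obj (Src m)" using cat_dom[OF lens_src[OF m] k] .
  have "FA m k \<in> Arr (Tgt m)" "Dom (Tgt m) (FA m k) = FO m (Dom (Src m) k)"
    using lens_FA[OF m k] lens_FA_dom[OF m k] by auto
  then show ?thesis using lens_Put[OF m d] lens_FA_Put[OF m d] i k by (auto dest: inj_onD)
qed

lemma inj_put':
  assumes m: "is_lens m" and i: "inj_on (FA m) (Arr (Src m))"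
    and k: "k \<in> Arr (Src m)" and x: "Dom (Src m) k = x"
  shows "Put m x (FA m k) = k"
  using inj_put[OF m i k] x by simp

lemma inj_mono:
  assumes m: "is_lens m" and i: "inj_on (FA m) (Arr (Src m))"
  shows "lens_mono m"
  unfolding lens_mono_def
proof (intro conjI allI impI)
  show "is_lens m" by fact
  fix f g
  assume H: "is_lens f \<and> is_lens g \<and> Src f = Src g \<and> Tgt f = Src m \<and> Tgt g = Src m \<and> lcomp m f = lcomp m g"
  then have f: "is_lens f" and g: "is_lens g" and ss: "Src f = Src g" and tf: "Tgt f = Src m"
    and tg: "Tgt g = Src m" and eq: "lcomp m f = lcomp m g" by auto
  have FOeq: "FO f x = FO g x" for x
  proof (cases "x \<in> Obj (Src f)")
    case True
    have "FO (lcomp m f) x = FO (lcomp m g) x" using eq by simp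
    then have "FO m (FO f x) = FO m (FO g x)" using True ss by simp
    then show ?thesis using inj_obj[OF m i] lens_FO[OF f True] lens_FO[OF g] True ss tf tg by auto
  next
    case False
    then show ?thesis using lens_FO_ext[OF f] lens_FO_ext[OF g] ss by simp
  qed
  have FAeq: "FA f u = FA g u" for u
  proof (cases "u \<in> Arr (Src f)")
    case True
    have "FA (lcomp m f) u = FA (lcomp m g) u" using eq by simp
    then have "FA m (FA f u) = FA m (FA g u)" using True ss by simp
    then show ?thesis using i lens_FA[OF f True] lens_FA[OF g] True ss tf tg by (auto dest: inj_onD)
  next
    case False
    then show ?thesis using lens_FA_ext[OF f] lens_FA_ext[OF g] ss by simp
  qed
  have Puteq: "Put f x c = Put g x c" for x c
  proof (cases "x \<in> Obj (Src f) \<and> c \<in> Arr (Src m) \<and> Dom (Src m) c = FO f x")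
    case True
    have c1: "FA m c \<in> Arr (Tgt m)" "Dom (Tgt m) (FA m c) = FO m (FO f x)"
      using lens_FA[OF m] lens_FA_dom[OF m] True by auto
    have "Put (lcomp m f) x (FA m c) = Put (lcomp m g) x (FA m c)" using eq by simp
    then have "Put f x (Put m (FO f x) (FA m c)) = Put g x (Put m (FO g x) (FA m c))"
      using True c1 ss FOeq by simp
    then show ?thesis using inj_put'[OF m i] True FOeq by simp
  next
    case False
    then show ?thesis using lens_Put_ext[OF f] lens_Put_ext[OF g] ss tf tg FOeq by metis
  qed
  show "f = g" by (rule lens_eqI) (use ss tf tg FOeq FAeq Puteq in auto)
qed



definition idl :: "'u cat \<Rightarrow> 'u lens" where
  "idl C = \<lparr> Src = C, Tgt = C,
     FO = (\<lambda>x. if x \<in> Obj C then x else undefined),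
     FA = (\<lambda>f. if f \<in> Arr C then f else undefined),
     Put = (\<lambda>x b. if x \<in> Obj C \<and> b \<in> Arr C \<and> Dom C b = x then b else undefined) \<rparr>"

lemma idl_lens: assumes C: "category C" shows "is_lens (idl C)"
  by (rule lensI) (auto simp: idl_def cat_simps[OF C] C)

lemma lcomp_idl: assumes e: "is_lens e" shows "lcomp (idl (Tgt e)) e = e"
proof (rule lens_eqI)
  show "FO (lcomp (idl (Tgt e)) e) x = FO e x" for x
    using lens_FO[OF e] lens_FO_ext[OF e] by (auto simp: idl_def)
  show "FA (lcomp (idl (Tgt e)) e) x = FA e x" for x
    using lens_FA[OF e] lens_FA_ext[OF e] by (auto simp: idl_def)
  show "Put (lcomp (idl (Tgt e)) e) x c = Put e x c" for x c
    using lens_FO[OF e] lens_Put_ext[OF e, of x c] by (auto simp: idl_def)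
qed (auto simp: idl_def)

definition subc :: "'u cat \<Rightarrow> 'u set \<Rightarrow> 'u cat" where
  "subc B S = \<lparr> Obj = S, Arr = {u \<in> Arr B. Dom B u \<in> S},
     Dom = (\<lambda>u. if u \<in> Arr B \<and> Dom B u \<in> S then Dom B u else undefined),
     Cod = (\<lambda>u. if u \<in> Arr B \<and> Dom B u \<in> S then Cod B u else undefined),
     Idn = (\<lambda>x. if x \<in> S then Idn B x else undefined),
     Comp = (\<lambda>g f. if (f \<in> Arr B \<and> Dom B f \<in> S) \<and> (g \<in> Arr B \<and> Dom B g \<in> S) \<and> Cod B f = Dom B g
                   then Comp B g f else undefined) \<rparr>"

lemma subc_cat:
  assumes B: "category B" and S: "S \<subseteq> Obj B" and cl: "\<And>u. u \<in> Arr B \<Longrightarrow> Dom B u \<in> S \<Longrightarrow> Cod B u \<in> S"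
  shows "category (subc B S)"
proof (rule categoryI)
qed (use S cl in \<open>auto simp: subc_def cat_simps[OF B] cat_assoc[OF B]\<close>)

definition incl :: "'u cat \<Rightarrow> 'u set \<Rightarrow> 'u lens" where
  "incl B S = \<lparr> Src = subc B S, Tgt = B,
     FO = (\<lambda>x. if x \<in> S then x else undefined),
     FA = (\<lambda>u. if u \<in> Arr B \<and> Dom B u \<in> S then u else undefined),
     Put = (\<lambda>x b. if x \<in> S \<and> b \<in> Arr B \<and> Dom B b = x then b else undefined) \<rparr>"

lemma incl_lens:
  assumes B: "category B" and S: "S \<subseteq> Obj B" and cl: "\<And>u. u \<in> Arr B \<Longrightarrow> Dom B u \<in> S \<Longrightarrow> Cod B u \<in> S"
  shows "is_lens (incl B S)"
proof (rule lensI)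
  show "category (Src (incl B S))" using subc_cat[OF B S cl] by (simp add: incl_def)
qed (use S cl B in \<open>auto simp: incl_def subc_def cat_simps[OF B]\<close>)

lemma incl_mono:
  assumes B: "category B" and S: "S \<subseteq> Obj B" and cl: "\<And>u. u \<in> Arr B \<Longrightarrow> Dom B u \<in> S \<Longrightarrow> Cod B u \<in> S"
  shows "lens_mono (incl B S)"
  by (rule inj_mono[OF incl_lens[OF B S cl]]) (auto simp: incl_def subc_def inj_on_def)

lemma image_closed:
  assumes e: "is_lens e" and u: "u \<in> Arr (Tgt e)" and d: "Dom (Tgt e) u \<in> FO e ` Obj (Src e)"
  shows "Cod (Tgt e) u \<in> FO e ` Obj (Src e)"
proof -
  obtain x where x: "x \<in> Obj (Src e)" "Dom (Tgt e) u = FO e x" using d by auto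
  let ?p = "Put e x u"
  have p: "?p \<in> Arr (Src e)" "FA e ?p = u" using lens_Put[OF e x(1) u] lens_FA_Put[OF e x(1) u] x(2) by auto
  have "Cod (Tgt e) u = FO e (Cod (Src e) ?p)" using lens_FA_cod[OF e p(1)] p(2) by simp
  then show ?thesis using cat_cod[OF lens_src[OF e] p(1)] by auto
qed

lemma ortho_surj:
  assumes e: "is_lens e" and H: "\<forall>m. lens_mono m \<longrightarrow> left_orth e m"
  shows "FO e ` Obj (Src e) = Obj (Tgt e)"
proof -
  let ?B = "Tgt e" and ?S = "FO e ` Obj (Src e)"
  have B: "category ?B" using lens_tgt[OF e] .
  have S: "?S \<subseteq> Obj ?B" using lens_FO[OF e] by auto
  have cl: "\<And>u. u \<in> Arr ?B \<Longrightarrow> Dom ?B u \<in> ?S \<Longrightarrow> Cod ?B u \<in> ?S" using image_closed[OF e] by blast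
  let ?m = "incl ?B ?S"
  let ?f = "e\<lparr>Tgt := subc ?B ?S\<rparr>"
  let ?g = "idl ?B"
  have mono: "lens_mono ?m" using incl_mono[OF B S cl] .
  have lm: "is_lens ?m" using incl_lens[OF B S cl] .
  have lg: "is_lens ?g" using idl_lens[OF B] .
  have lf: "is_lens ?f"
  proof (rule lensI)
    show "category (Src ?f)" using lens_src[OF e] by simp
    show "category (Tgt ?f)" using subc_cat[OF B S cl] by simp
    show "Put ?f x b = undefined" if "\<not> (x \<in> Obj (Src ?f) \<and> b \<in> Arr (Tgt ?f) \<and> Dom (Tgt ?f) b = FO ?f x)" for x b
    proof (cases "x \<in> Obj (Src e) \<and> b \<in> Arr (Tgt e) \<and> Dom (Tgt e) b = FO e x")
      case True then show ?thesis using that by (auto simp: subc_def)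
    next
      case False then show ?thesis using lens_Put_ext[OF e] by simp
    qed
    show "Put ?f x (Comp (Tgt ?f) b' b) = Comp (Src ?f) (Put ?f (Cod (Src ?f) (Put ?f x b)) b') (Put ?f x b)"
      if a: "x \<in> Obj (Src ?f)" "b \<in> Arr (Tgt ?f)" "b' \<in> Arr (Tgt ?f)" "Dom (Tgt ?f) b = FO ?f x"
         "Dom (Tgt ?f) b' = FO ?f (Cod (Src ?f) (Put ?f x b))" for x b b'
    proof -
      have a': "x \<in> Obj (Src e)" "b \<in> Arr (Tgt e)" "b' \<in> Arr (Tgt e)" "Dom (Tgt e) b = FO e x"
         "Dom (Tgt e) b' = FO e (Cod (Src e) (Put e x b))" "Dom (Tgt e) b \<in> ?S" "Dom (Tgt e) b' \<in> ?S"
        using a by (auto simp: subc_def split: if_splits)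
      have p: "Put e x b \<in> Arr (Src e)" using lens_Put[OF e a'(1,2,4)] .
      have "Cod (Tgt e) b = FO e (Cod (Src e) (Put e x b))"
        using lens_FA_cod[OF e p] lens_FA_Put[OF e a'(1,2,4)] by simp
      then have "Comp (Tgt ?f) b' b = Comp (Tgt e) b' b" using a' by (simp add: subc_def)
      then show ?thesis using lens_Put_comp[OF e a'(1,2,3,4,5)] by simp
    qed
  qed (use e in \<open>auto simp: subc_def lens_FO lens_FA lens_FA_dom lens_FA_cod lens_FA_idn lens_FA_comp
     lens_Put lens_Put_dom lens_FA_Put lens_Put_idn lens_Put_comp lens_FO_ext lens_FA_ext lens_Put_ext
     cat_dom[OF lens_src[OF e]]\<close>)
  have sq: "lcomp ?g e = lcomp ?m ?f"
  proof (rule lens_eqI)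
    show "FO (lcomp ?g e) x = FO (lcomp ?m ?f) x" for x
      using lens_FO[OF e] by (auto simp: idl_def incl_def)
    show "FA (lcomp ?g e) x = FA (lcomp ?m ?f) x" for x
      using lens_FA[OF e] lens_FA_dom[OF e] cat_dom[OF lens_src[OF e]] by (auto simp: idl_def incl_def)
    show "Put (lcomp ?g e) x c = Put (lcomp ?m ?f) x c" for x c
      using lens_FO[OF e] by (auto simp: idl_def incl_def)
  qed (auto simp: idl_def incl_def)
  have "left_orth e ?m" using H mono by blast
  then have all: "\<forall>f g. is_lens f \<and> is_lens g \<and> Src f = Src e \<and> Tgt f = Src ?m \<and>
            Src g = Tgt e \<and> Tgt g = Tgt ?m \<and> lcomp g e = lcomp ?m f \<longrightarrow>
        (\<exists>!h. is_lens h \<and> Src h = Tgt e \<and> Tgt h = Src ?m \<and> lcomp h e = f \<and> lcomp ?m h = g)"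
    unfolding left_orth_def by blast
  have facts: "Src ?f = Src e" "Tgt ?f = Src ?m" "Src ?g = Tgt e" "Tgt ?g = Tgt ?m"
    by (simp_all add: incl_def idl_def)
  have "\<exists>!h. is_lens h \<and> Src h = Tgt e \<and> Tgt h = Src ?m \<and> lcomp h e = ?f \<and> lcomp ?m h = ?g"
    using spec[OF spec[OF all, of ?f], of ?g] lf lg facts sq by blast
  then obtain h where h: "is_lens h" "Src h = Tgt e" "Tgt h = Src ?m" "lcomp ?m h = ?g"
    by blast
  show ?thesis
  proof
    show "?S \<subseteq> Obj ?B" by fact
    show "Obj ?B \<subseteq> ?S"
    proof
      fix y assume y: "y \<in> Obj ?B"
      have "FO (lcomp ?m h) y = FO ?g y" using h(4) by simp
      then have "FO ?m (FO h y) = y" using y h(2) by (simp add: idl_def)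
      moreover have "FO h y \<in> ?S" using lens_FO[OF h(1)] y h(2,3) by (simp add: incl_def subc_def)
      ultimately show "y \<in> ?S" by (simp add: incl_def)
    qed
  qed
qed



definition transp :: "('v \<Rightarrow> 'u) \<Rightarrow> 'v cat \<Rightarrow> 'u cat" where
 "transp i K = \<lparr>Obj = i ` Obj K, Arr = i ` Arr K,
   Dom = (\<lambda>a. if a \<in> i ` Arr K then i (Dom K (inv i a)) else undefined),
   Cod = (\<lambda>a. if a \<in> i ` Arr K then i (Cod K (inv i a)) else undefined),
   Idn = (\<lambda>x. if x \<in> i ` Obj K then i (Idn K (inv i x)) else undefined),
   Comp = (\<lambda>g f. if f \<in> i ` Arr K \<and> g \<in> i ` Arr K \<and> Cod K (inv i f) = Dom K (inv i g)
                 then i (Comp K (inv i g) (inv i f)) else undefined)\<rparr>"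

lemma transp_cat:
  assumes i: "inj i"
    and "\<And>f. f \<in> Arr K \<Longrightarrow> Dom K f \<in> Obj K" "\<And>f. f \<in> Arr K \<Longrightarrow> Cod K f \<in> Obj K"
    "\<And>x. x \<in> Obj K \<Longrightarrow> Idn K x \<in> Arr K" "\<And>x. x \<in> Obj K \<Longrightarrow> Dom K (Idn K x) = x"
    "\<And>x. x \<in> Obj K \<Longrightarrow> Cod K (Idn K x) = x"
    "\<And>f g. f \<in> Arr K \<Longrightarrow> g \<in> Arr K \<Longrightarrow> Cod K f = Dom K g \<Longrightarrow> Comp K g f \<in> Arr K"
    "\<And>f g. f \<in> Arr K \<Longrightarrow> g \<in> Arr K \<Longrightarrow> Cod K f = Dom K g \<Longrightarrow> Dom K (Comp K g f) = Dom K f"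
    "\<And>f g. f \<in> Arr K \<Longrightarrow> g \<in> Arr K \<Longrightarrow> Cod K f = Dom K g \<Longrightarrow> Cod K (Comp K g f) = Cod K g"
    "\<And>f. f \<in> Arr K \<Longrightarrow> Comp K (Idn K (Cod K f)) f = f"
    "\<And>f. f \<in> Arr K \<Longrightarrow> Comp K f (Idn K (Dom K f)) = f"
    "\<And>f g h. f \<in> Arr K \<Longrightarrow> g \<in> Arr K \<Longrightarrow> h \<in> Arr K \<Longrightarrow> Cod K f = Dom K g \<Longrightarrow> Cod K g = Dom K h \<Longrightarrow>
       Comp K h (Comp K g f) = Comp K (Comp K h g) f"
  shows "category (transp i K)"
  by (rule categoryI) (use assms in \<open>auto simp: transp_def inv_f_f[OF i] inj_image_mem_iff[OF i] inj_eq[OF i]\<close>)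

lemma tr_Obj: "inj i \<Longrightarrow> Obj (transp i K) = i ` Obj K" by (simp add: transp_def)
lemma tr_Arr: "inj i \<Longrightarrow> Arr (transp i K) = i ` Arr K" by (simp add: transp_def)
lemma tr_mem: "inj i \<Longrightarrow> (i a \<in> Obj (transp i K)) = (a \<in> Obj K)" "inj i \<Longrightarrow> (i a \<in> Arr (transp i K)) = (a \<in> Arr K)"
  by (auto simp: transp_def inj_image_mem_iff)
lemma tr_Dom: "inj i \<Longrightarrow> a \<in> Arr K \<Longrightarrow> Dom (transp i K) (i a) = i (Dom K a)"
  by (simp add: transp_def inv_f_f)
lemma tr_Cod: "inj i \<Longrightarrow> a \<in> Arr K \<Longrightarrow> Cod (transp i K) (i a) = i (Cod K a)"
  by (simp add: transp_def inv_f_f)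
lemma tr_Idn: "inj i \<Longrightarrow> a \<in> Obj K \<Longrightarrow> Idn (transp i K) (i a) = i (Idn K a)"
  by (simp add: transp_def inv_f_f)
lemma tr_Comp: "inj i \<Longrightarrow> f \<in> Arr K \<Longrightarrow> g \<in> Arr K \<Longrightarrow> Cod K f = Dom K g \<Longrightarrow> Comp (transp i K) (i g) (i f) = i (Comp K g f)"
  by (simp add: transp_def inv_f_f)
lemma tr_Comp': "inj i \<Longrightarrow> f \<in> Arr K \<Longrightarrow> g \<in> Arr K \<Longrightarrow> Comp (transp i K) (i g) (i f) = (if Cod K f = Dom K g then i (Comp K g f) else undefined)"
  by (simp add: transp_def inv_f_f inj_image_mem_iff)

lemmas tr_simps = tr_mem tr_Dom tr_Cod tr_Idn tr_Comp' inv_f_f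

section \<open>Kernel pair\<close>

definition kp :: "'u lens \<Rightarrow> ('u \<times> 'u) cat" where
  "kp m = \<lparr>Obj = {(x,y). x \<in> Obj (Src m) \<and> y \<in> Obj (Src m) \<and> FO m x = FO m y},
          Arr = {(u,v). u \<in> Arr (Src m) \<and> v \<in> Arr (Src m) \<and> FA m u = FA m v},
          Dom = (\<lambda>(u,v). (Dom (Src m) u, Dom (Src m) v)),
          Cod = (\<lambda>(u,v). (Cod (Src m) u, Cod (Src m) v)),
          Idn = (\<lambda>(x,y). (Idn (Src m) x, Idn (Src m) y)),
          Comp = (\<lambda>(u',v') (u,v). (Comp (Src m) u' u, Comp (Src m) v' v))\<rparr>"

lemma kp_cat: assumes m: "is_lens m" and i: "inj i" shows "category (transp i (kp m))"
proof -
  have C: "category (Src m)" using lens_src[OF m] .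
  show ?thesis
  proof (rule transp_cat[OF i])
    fix f assume "f \<in> Arr (kp m)"
    then show "Dom (kp m) f \<in> Obj (kp m)" "Cod (kp m) f \<in> Obj (kp m)"
      by (auto simp: kp_def cat_simps[OF C] simp flip: lens_FA_dom[OF m] lens_FA_cod[OF m])
  next
    fix x assume "x \<in> Obj (kp m)"
    then show "Idn (kp m) x \<in> Arr (kp m)" "Dom (kp m) (Idn (kp m) x) = x" "Cod (kp m) (Idn (kp m) x) = x"
      by (auto simp: kp_def cat_simps[OF C] lens_FA_idn[OF m])
  next
    fix f g assume "f \<in> Arr (kp m)" "g \<in> Arr (kp m)" "Cod (kp m) f = Dom (kp m) g"
    then show "Comp (kp m) g f \<in> Arr (kp m)" "Dom (kp m) (Comp (kp m) g f) = Dom (kp m) f"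
      "Cod (kp m) (Comp (kp m) g f) = Cod (kp m) g"
      by (auto simp: kp_def cat_simps[OF C] lens_FA_comp[OF m])
  next
    fix f assume "f \<in> Arr (kp m)"
    then show "Comp (kp m) (Idn (kp m) (Cod (kp m) f)) f = f" "Comp (kp m) f (Idn (kp m) (Dom (kp m) f)) = f"
      by (auto simp: kp_def cat_simps[OF C])
  next
    fix f g h assume "f \<in> Arr (kp m)" "g \<in> Arr (kp m)" "h \<in> Arr (kp m)" "Cod (kp m) f = Dom (kp m) g" "Cod (kp m) g = Dom (kp m) h"
    then show "Comp (kp m) h (Comp (kp m) g f) = Comp (kp m) (Comp (kp m) h g) f"
      by (auto simp: kp_def cat_assoc[OF C])
  qed
qed



lemma kp_simps:
  "(p \<in> Obj (kp m)) = (fst p \<in> Obj (Src m) \<and> snd p \<in> Obj (Src m) \<and> FO m (fst p) = FO m (snd p))"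
  "(p \<in> Arr (kp m)) = (fst p \<in> Arr (Src m) \<and> snd p \<in> Arr (Src m) \<and> FA m (fst p) = FA m (snd p))"
  "Dom (kp m) (u,v) = (Dom (Src m) u, Dom (Src m) v)"
  "Cod (kp m) (u,v) = (Cod (Src m) u, Cod (Src m) v)"
  "Idn (kp m) (x,y) = (Idn (Src m) x, Idn (Src m) y)"
  "Comp (kp m) (u',v') (u,v) = (Comp (Src m) u' u, Comp (Src m) v' v)"
  by (auto simp: kp_def)

definition kpr1 :: "('u \<times> 'u \<Rightarrow> 'u) \<Rightarrow> 'u lens \<Rightarrow> 'u lens" where
 "kpr1 i m = \<lparr>Src = transp i (kp m), Tgt = Src m,
   FO = (\<lambda>a. if a \<in> i ` Obj (kp m) then fst (inv i a) else undefined),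
   FA = (\<lambda>a. if a \<in> i ` Arr (kp m) then fst (inv i a) else undefined),
   Put = (\<lambda>a u. if a \<in> i ` Obj (kp m) \<and> u \<in> Arr (Src m) \<and> Dom (Src m) u = fst (inv i a)
       then i (u, Put m (snd (inv i a)) (FA m u)) else undefined)\<rparr>"

definition kpr2 :: "('u \<times> 'u \<Rightarrow> 'u) \<Rightarrow> 'u lens \<Rightarrow> 'u lens" where
 "kpr2 i m = \<lparr>Src = transp i (kp m), Tgt = Src m,
   FO = (\<lambda>a. if a \<in> i ` Obj (kp m) then snd (inv i a) else undefined),
   FA = (\<lambda>a. if a \<in> i ` Arr (kp m) then snd (inv i a) else undefined),
   Put = (\<lambda>a u. if a \<in> i ` Obj (kp m) \<and> u \<in> Arr (Src m) \<and> Dom (Src m) u = snd (inv i a)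
       then i (Put m (fst (inv i a)) (FA m u), u) else undefined)\<rparr>"

lemma kpr1_lens:
  assumes m: "is_lens m" and i: "inj i"
  shows "is_lens (kpr1 i m)"
proof -
  have C: "category (Src m)" using lens_src[OF m] .
  have X: "category (transp i (kp m))" using kp_cat[OF m i] .
  note simps = kpr1_def tr_simps[OF i] kp_simps inj_image_mem_iff[OF i] inj_eq[OF i]
  have putm: "Put m y (FA m u) \<in> Arr (Src m) \<and> Dom (Src m) (Put m y (FA m u)) = y \<and> FA m (Put m y (FA m u)) = FA m u"
    if "u \<in> Arr (Src m)" "y \<in> Obj (Src m)" "FO m (Dom (Src m) u) = FO m y" for u y
  proof -
    have "FA m u \<in> Arr (Tgt m)" "Dom (Tgt m) (FA m u) = FO m y" using lens_FA[OF m] lens_FA_dom[OF m] that by auto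
    then show ?thesis using lens_Put[OF m] lens_Put_dom[OF m] lens_FA_Put[OF m] that by auto
  qed
  show ?thesis
  proof (rule lensI)
    show "category (Src (kpr1 i m))" using X by (simp add: kpr1_def)
    show "category (Tgt (kpr1 i m))" using C by (simp add: kpr1_def)
  next
    fix a assume "a \<in> Obj (Src (kpr1 i m))"
    then obtain x y where a: "a = i (x,y)" "x \<in> Obj (Src m)" "y \<in> Obj (Src m)" "FO m x = FO m y"
      by (auto simp: kpr1_def tr_Obj[OF i] kp_simps)
    show "FO (kpr1 i m) a \<in> Obj (Tgt (kpr1 i m))" using a by (simp add: simps)
    show "FA (kpr1 i m) (Idn (Src (kpr1 i m)) a) = Idn (Tgt (kpr1 i m)) (FO (kpr1 i m) a)"
      using a cat_idn[OF C] lens_FA_idn[OF m] by (simp add: simps)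
    show "Put (kpr1 i m) a (Idn (Tgt (kpr1 i m)) (FO (kpr1 i m) a)) = Idn (Src (kpr1 i m)) a"
      using a cat_idn[OF C] cat_idn_dom[OF C] lens_FA_idn[OF m] lens_Put_idn[OF m] by (simp add: simps)
  next
    fix f assume "f \<in> Arr (Src (kpr1 i m))"
    then obtain u v where f: "f = i (u,v)" "u \<in> Arr (Src m)" "v \<in> Arr (Src m)" "FA m u = FA m v"
      by (auto simp: kpr1_def tr_Arr[OF i] kp_simps)
    have d: "FO m (Dom (Src m) u) = FO m (Dom (Src m) v)" "FO m (Cod (Src m) u) = FO m (Cod (Src m) v)"
      using f lens_FA_dom[OF m] lens_FA_cod[OF m] by metis+
    show "FA (kpr1 i m) f \<in> Arr (Tgt (kpr1 i m))" using f by (simp add: simps)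
    show "Dom (Tgt (kpr1 i m)) (FA (kpr1 i m) f) = FO (kpr1 i m) (Dom (Src (kpr1 i m)) f)"
      using f d cat_dom[OF C] by (simp add: simps)
    show "Cod (Tgt (kpr1 i m)) (FA (kpr1 i m) f) = FO (kpr1 i m) (Cod (Src (kpr1 i m)) f)"
      using f d cat_cod[OF C] by (simp add: simps)
  next
    fix f g assume "f \<in> Arr (Src (kpr1 i m))" "g \<in> Arr (Src (kpr1 i m))" "Cod (Src (kpr1 i m)) f = Dom (Src (kpr1 i m)) g"
    then obtain u v u' v' where f: "f = i (u,v)" "u \<in> Arr (Src m)" "v \<in> Arr (Src m)" "FA m u = FA m v"
      and g: "g = i (u',v')" "u' \<in> Arr (Src m)" "v' \<in> Arr (Src m)" "FA m u' = FA m v'"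
      and c: "Cod (Src m) u = Dom (Src m) u'" "Cod (Src m) v = Dom (Src m) v'"
      by (auto simp: kpr1_def tr_Arr[OF i] tr_simps[OF i] kp_simps inj_eq[OF i])
    show "FA (kpr1 i m) (Comp (Src (kpr1 i m)) g f) = Comp (Tgt (kpr1 i m)) (FA (kpr1 i m) g) (FA (kpr1 i m) f)"
      using f g c cat_comp[OF C] lens_FA_comp[OF m] by (simp add: simps)
  next
    fix a b assume H: "a \<in> Obj (Src (kpr1 i m))" "b \<in> Arr (Tgt (kpr1 i m))" "Dom (Tgt (kpr1 i m)) b = FO (kpr1 i m) a"
    then obtain x y where a: "a = i (x,y)" "x \<in> Obj (Src m)" "y \<in> Obj (Src m)" "FO m x = FO m y"
      by (auto simp: kpr1_def tr_Obj[OF i] kp_simps)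
    have b: "b \<in> Arr (Src m)" "Dom (Src m) b = x" using H a by (auto simp: simps)
    have p: "Put m y (FA m b) \<in> Arr (Src m)" "Dom (Src m) (Put m y (FA m b)) = y" "FA m (Put m y (FA m b)) = FA m b"
      using putm[OF b(1) a(3)] a b by auto
    show "Put (kpr1 i m) a b \<in> Arr (Src (kpr1 i m))" using a b p by (simp add: simps)
    show "Dom (Src (kpr1 i m)) (Put (kpr1 i m) a b) = a" using a b p by (simp add: simps)
    show "FA (kpr1 i m) (Put (kpr1 i m) a b) = b" using a b p by (simp add: simps)
  next
    fix a b b' assume H: "a \<in> Obj (Src (kpr1 i m))" "b \<in> Arr (Tgt (kpr1 i m))" "b' \<in> Arr (Tgt (kpr1 i m))"
      "Dom (Tgt (kpr1 i m)) b = FO (kpr1 i m) a"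
      "Dom (Tgt (kpr1 i m)) b' = FO (kpr1 i m) (Cod (Src (kpr1 i m)) (Put (kpr1 i m) a b))"
    then obtain x y where a: "a = i (x,y)" "x \<in> Obj (Src m)" "y \<in> Obj (Src m)" "FO m x = FO m y"
      by (auto simp: kpr1_def tr_Obj[OF i] kp_simps)
    have b: "b \<in> Arr (Src m)" "Dom (Src m) b = x" using H a by (auto simp: simps)
    let ?p = "Put m y (FA m b)"
    have p: "?p \<in> Arr (Src m)" "Dom (Src m) ?p = y" "FA m ?p = FA m b"
      using putm[OF b(1) a(3)] a b by auto
    let ?y' = "Cod (Src m) ?p"
    have y': "?y' \<in> Obj (Src m)" "FO m (Cod (Src m) b) = FO m ?y'"
      using cat_cod[OF C p(1)] lens_FA_cod[OF m p(1)] lens_FA_cod[OF m b(1)] p(3) by auto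
    have cb: "Cod (Src m) b \<in> Obj (Src m)" using cat_cod[OF C b(1)] .
    have b': "b' \<in> Arr (Src m)" "Dom (Src m) b' = Cod (Src m) b"
      using H(3,5) a b p y' cb by (auto simp: simps)
    have fb': "FA m b' \<in> Arr (Tgt m)" "Dom (Tgt m) (FA m b') = FO m ?y'"
      using lens_FA[OF m b'(1)] lens_FA_dom[OF m b'(1)] b'(2) y' by auto
    have fb: "FA m b \<in> Arr (Tgt m)" "Dom (Tgt m) (FA m b) = FO m y"
      using lens_FA[OF m b(1)] lens_FA_dom[OF m b(1)] b(2) a(4) by auto
    have q: "Put m ?y' (FA m b') \<in> Arr (Src m)" "Dom (Src m) (Put m ?y' (FA m b')) = ?y'" "FA m (Put m ?y' (FA m b')) = FA m b'"
      using putm[OF b'(1) y'(1)] b'(2) y'(2) by auto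
    have comp: "Put m y (FA m (Comp (Src m) b' b)) = Comp (Src m) (Put m ?y' (FA m b')) ?p"
      using lens_FA_comp[OF m b(1) b'(1)] b'(2) lens_Put_comp[OF m a(3) fb(1) fb'(1) fb(2)] fb'(2) by simp
    have cbb: "Comp (Src m) b' b \<in> Arr (Src m)" "Dom (Src m) (Comp (Src m) b' b) = x"
      using cat_comp[OF C b(1) b'(1)] cat_comp_dom[OF C b(1) b'(1)] b'(2) b(2) by auto
    have arrs: "(b, ?p) \<in> Arr (kp m)" "(b', Put m ?y' (FA m b')) \<in> Arr (kp m)"
      using b p b' q by (auto simp: kp_simps)
    have cp: "Cod (Src (kpr1 i m)) (i (b, ?p)) = i (Cod (Src m) b, ?y')"
      using arrs by (simp add: kpr1_def tr_Cod[OF i] kp_simps)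
    have E2: "Put (kpr1 i m) (i (Cod (Src m) b, ?y')) b' = i (b', Put m ?y' (FA m b'))"
      using y' cb b' by (simp add: simps)
    have E1: "Put (kpr1 i m) a b = i (b, ?p)" using a b by (simp add: simps)
    have E3: "Put (kpr1 i m) a (Comp (Tgt (kpr1 i m)) b' b) = i (Comp (Src m) b' b, Comp (Src m) (Put m ?y' (FA m b')) ?p)"
      using a cbb comp by (simp add: simps)
    have E4: "Comp (Src (kpr1 i m)) (i (b', Put m ?y' (FA m b'))) (i (b, ?p)) = i (Comp (Src m) b' b, Comp (Src m) (Put m ?y' (FA m b')) ?p)"
      using tr_Comp[OF i arrs(1) arrs(2)] b'(2) q(2) by (simp add: kpr1_def kp_simps)
    show "Put (kpr1 i m) a (Comp (Tgt (kpr1 i m)) b' b) =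
       Comp (Src (kpr1 i m)) (Put (kpr1 i m) (Cod (Src (kpr1 i m)) (Put (kpr1 i m) a b)) b') (Put (kpr1 i m) a b)"
      by (simp only: E1 E2 E3 E4 cp)
  next
    fix x assume "x \<notin> Obj (Src (kpr1 i m))" then show "FO (kpr1 i m) x = undefined" by (simp add: kpr1_def transp_def)
  next
    fix x assume "x \<notin> Arr (Src (kpr1 i m))" then show "FA (kpr1 i m) x = undefined" by (simp add: kpr1_def transp_def)
  next
    fix x b assume "\<not> (x \<in> Obj (Src (kpr1 i m)) \<and> b \<in> Arr (Tgt (kpr1 i m)) \<and> Dom (Tgt (kpr1 i m)) b = FO (kpr1 i m) x)"
    then show "Put (kpr1 i m) x b = undefined" by (auto simp: kpr1_def transp_def)
  qed
qed

lemma kpr2_lens: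
  assumes m: "is_lens m" and i: "inj i"
  shows "is_lens (kpr2 i m)"
proof -
  have C: "category (Src m)" using lens_src[OF m] .
  have X: "category (transp i (kp m))" using kp_cat[OF m i] .
  note simps = kpr2_def tr_simps[OF i] kp_simps inj_image_mem_iff[OF i] inj_eq[OF i]
  have putm: "Put m y (FA m u) \<in> Arr (Src m) \<and> Dom (Src m) (Put m y (FA m u)) = y \<and> FA m (Put m y (FA m u)) = FA m u"
    if "u \<in> Arr (Src m)" "y \<in> Obj (Src m)" "FO m (Dom (Src m) u) = FO m y" for u y
  proof -
    have "FA m u \<in> Arr (Tgt m)" "Dom (Tgt m) (FA m u) = FO m y" using lens_FA[OF m] lens_FA_dom[OF m] that by auto
    then show ?thesis using lens_Put[OF m] lens_Put_dom[OF m] lens_FA_Put[OF m] that by auto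
  qed
  show ?thesis
  proof (rule lensI)
    show "category (Src (kpr2 i m))" using X by (simp add: kpr2_def)
    show "category (Tgt (kpr2 i m))" using C by (simp add: kpr2_def)
  next
    fix a assume "a \<in> Obj (Src (kpr2 i m))"
    then obtain x y where a: "a = i (y,x)" "x \<in> Obj (Src m)" "y \<in> Obj (Src m)" "FO m y = FO m x"
      by (auto simp: kpr2_def tr_Obj[OF i] kp_simps)
    show "FO (kpr2 i m) a \<in> Obj (Tgt (kpr2 i m))" using a by (simp add: simps)
    show "FA (kpr2 i m) (Idn (Src (kpr2 i m)) a) = Idn (Tgt (kpr2 i m)) (FO (kpr2 i m) a)"
      using a cat_idn[OF C] lens_FA_idn[OF m] by (simp add: simps)
    show "Put (kpr2 i m) a (Idn (Tgt (kpr2 i m)) (FO (kpr2 i m) a)) = Idn (Src (kpr2 i m)) a"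
      using a cat_idn[OF C] cat_idn_dom[OF C] lens_FA_idn[OF m] lens_Put_idn[OF m a(3)] by (simp add: simps)
  next
    fix f assume "f \<in> Arr (Src (kpr2 i m))"
    then obtain u v where f: "f = i (v,u)" "u \<in> Arr (Src m)" "v \<in> Arr (Src m)" "FA m v = FA m u"
      by (auto simp: kpr2_def tr_Arr[OF i] kp_simps)
    have d: "FO m (Dom (Src m) u) = FO m (Dom (Src m) v)" "FO m (Cod (Src m) u) = FO m (Cod (Src m) v)"
      using f lens_FA_dom[OF m] lens_FA_cod[OF m] by metis+
    show "FA (kpr2 i m) f \<in> Arr (Tgt (kpr2 i m))" using f by (simp add: simps)
    show "Dom (Tgt (kpr2 i m)) (FA (kpr2 i m) f) = FO (kpr2 i m) (Dom (Src (kpr2 i m)) f)"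
      using f d cat_dom[OF C] by (simp add: simps)
    show "Cod (Tgt (kpr2 i m)) (FA (kpr2 i m) f) = FO (kpr2 i m) (Cod (Src (kpr2 i m)) f)"
      using f d cat_cod[OF C] by (simp add: simps)
  next
    fix f g assume "f \<in> Arr (Src (kpr2 i m))" "g \<in> Arr (Src (kpr2 i m))" "Cod (Src (kpr2 i m)) f = Dom (Src (kpr2 i m)) g"
    then obtain u v u' v' where f: "f = i (v,u)" "u \<in> Arr (Src m)" "v \<in> Arr (Src m)" "FA m v = FA m u"
      and g: "g = i (v',u')" "u' \<in> Arr (Src m)" "v' \<in> Arr (Src m)" "FA m v' = FA m u'"
      and c: "Cod (Src m) u = Dom (Src m) u'" "Cod (Src m) v = Dom (Src m) v'"
      by (auto simp: kpr2_def tr_Arr[OF i] tr_simps[OF i] kp_simps inj_eq[OF i])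
    show "FA (kpr2 i m) (Comp (Src (kpr2 i m)) g f) = Comp (Tgt (kpr2 i m)) (FA (kpr2 i m) g) (FA (kpr2 i m) f)"
      using f g c cat_comp[OF C] lens_FA_comp[OF m] by (simp add: simps)
  next
    fix a b assume H: "a \<in> Obj (Src (kpr2 i m))" "b \<in> Arr (Tgt (kpr2 i m))" "Dom (Tgt (kpr2 i m)) b = FO (kpr2 i m) a"
    then obtain x y where a: "a = i (y,x)" "x \<in> Obj (Src m)" "y \<in> Obj (Src m)" "FO m y = FO m x"
      by (auto simp: kpr2_def tr_Obj[OF i] kp_simps)
    have b: "b \<in> Arr (Src m)" "Dom (Src m) b = x" using H a by (auto simp: simps)
    have p: "Put m y (FA m b) \<in> Arr (Src m)" "Dom (Src m) (Put m y (FA m b)) = y" "FA m (Put m y (FA m b)) = FA m b"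
      using putm[OF b(1) a(3)] a b by auto
    show "Put (kpr2 i m) a b \<in> Arr (Src (kpr2 i m))" using a b p by (simp add: simps)
    show "Dom (Src (kpr2 i m)) (Put (kpr2 i m) a b) = a" using a b p by (simp add: simps)
    show "FA (kpr2 i m) (Put (kpr2 i m) a b) = b" using a b p by (simp add: simps)
  next
    fix a b b' assume H: "a \<in> Obj (Src (kpr2 i m))" "b \<in> Arr (Tgt (kpr2 i m))" "b' \<in> Arr (Tgt (kpr2 i m))"
      "Dom (Tgt (kpr2 i m)) b = FO (kpr2 i m) a"
      "Dom (Tgt (kpr2 i m)) b' = FO (kpr2 i m) (Cod (Src (kpr2 i m)) (Put (kpr2 i m) a b))"
    then obtain x y where a: "a = i (y,x)" "x \<in> Obj (Src m)" "y \<in> Obj (Src m)" "FO m y = FO m x"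
      by (auto simp: kpr2_def tr_Obj[OF i] kp_simps)
    have b: "b \<in> Arr (Src m)" "Dom (Src m) b = x" using H a by (auto simp: simps)
    let ?p = "Put m y (FA m b)"
    have p: "?p \<in> Arr (Src m)" "Dom (Src m) ?p = y" "FA m ?p = FA m b"
      using putm[OF b(1) a(3)] a b by auto
    let ?y' = "Cod (Src m) ?p"
    have y': "?y' \<in> Obj (Src m)" "FO m (Cod (Src m) b) = FO m ?y'"
      using cat_cod[OF C p(1)] lens_FA_cod[OF m p(1)] lens_FA_cod[OF m b(1)] p(3) by auto
    have cb: "Cod (Src m) b \<in> Obj (Src m)" using cat_cod[OF C b(1)] .
    have b': "b' \<in> Arr (Src m)" "Dom (Src m) b' = Cod (Src m) b"
      using H(3,5) a b p y' cb by (auto simp: simps)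
    have fb': "FA m b' \<in> Arr (Tgt m)" "Dom (Tgt m) (FA m b') = FO m ?y'"
      using lens_FA[OF m b'(1)] lens_FA_dom[OF m b'(1)] b'(2) y' by auto
    have fb: "FA m b \<in> Arr (Tgt m)" "Dom (Tgt m) (FA m b) = FO m y"
      using lens_FA[OF m b(1)] lens_FA_dom[OF m b(1)] b(2) a(4) by auto
    have q: "Put m ?y' (FA m b') \<in> Arr (Src m)" "Dom (Src m) (Put m ?y' (FA m b')) = ?y'" "FA m (Put m ?y' (FA m b')) = FA m b'"
      using putm[OF b'(1) y'(1)] b'(2) y'(2) by auto
    have comp: "Put m y (FA m (Comp (Src m) b' b)) = Comp (Src m) (Put m ?y' (FA m b')) ?p"
      using lens_FA_comp[OF m b(1) b'(1)] b'(2) lens_Put_comp[OF m a(3) fb(1) fb'(1) fb(2)] fb'(2) by simp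
    have cbb: "Comp (Src m) b' b \<in> Arr (Src m)" "Dom (Src m) (Comp (Src m) b' b) = x"
      using cat_comp[OF C b(1) b'(1)] cat_comp_dom[OF C b(1) b'(1)] b'(2) b(2) by auto
    have arrs: "(?p, b) \<in> Arr (kp m)" "(Put m ?y' (FA m b'), b') \<in> Arr (kp m)"
      using b p b' q by (auto simp: kp_simps)
    have cp: "Cod (Src (kpr2 i m)) (i (?p, b)) = i (?y', Cod (Src m) b)"
      using arrs by (simp add: kpr2_def tr_Cod[OF i] kp_simps)
    have E2: "Put (kpr2 i m) (i (?y', Cod (Src m) b)) b' = i (Put m ?y' (FA m b'), b')"
      using y' cb b' by (simp add: simps)
    have E1: "Put (kpr2 i m) a b = i (?p, b)" using a b by (simp add: simps)
    have E3: "Put (kpr2 i m) a (Comp (Tgt (kpr2 i m)) b' b) = i (Comp (Src m) (Put m ?y' (FA m b')) ?p, Comp (Src m) b' b)"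
      using a cbb comp by (simp add: simps)
    have E4: "Comp (Src (kpr2 i m)) (i (Put m ?y' (FA m b'), b')) (i (?p, b)) = i (Comp (Src m) (Put m ?y' (FA m b')) ?p, Comp (Src m) b' b)"
      using tr_Comp[OF i arrs(1) arrs(2)] b'(2) q(2) by (simp add: kpr2_def kp_simps)
    show "Put (kpr2 i m) a (Comp (Tgt (kpr2 i m)) b' b) =
       Comp (Src (kpr2 i m)) (Put (kpr2 i m) (Cod (Src (kpr2 i m)) (Put (kpr2 i m) a b)) b') (Put (kpr2 i m) a b)"
      by (simp only: E1 E2 E3 E4 cp)
  next
    fix x assume "x \<notin> Obj (Src (kpr2 i m))" then show "FO (kpr2 i m) x = undefined" by (simp add: kpr2_def transp_def)
  next
    fix x assume "x \<notin> Arr (Src (kpr2 i m))" then show "FA (kpr2 i m) x = undefined" by (simp add: kpr2_def transp_def)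
  next
    fix x b assume "\<not> (x \<in> Obj (Src (kpr2 i m)) \<and> b \<in> Arr (Tgt (kpr2 i m)) \<and> Dom (Tgt (kpr2 i m)) b = FO (kpr2 i m) x)"
    then show "Put (kpr2 i m) x b = undefined" by (auto simp: kpr2_def transp_def)
  qed
qed




lemma mono_inj:
  assumes inf: "infinite (UNIV :: 'u set)" and mo: "lens_mono (m :: 'u lens)"
  shows "inj_on (FA m) (Arr (Src m))"
proof -
  obtain i :: "'u \<times> 'u \<Rightarrow> 'u" where i: "inj i" using inj_pair_exists[OF inf] by blast
  have m: "is_lens m" using mo by (simp add: lens_mono_def)
  have l1: "is_lens (kpr1 i m)" using kpr1_lens[OF m i] .
  have l2: "is_lens (kpr2 i m)" using kpr2_lens[OF m i] .
  have eq: "lcomp m (kpr1 i m) = lcomp m (kpr2 i m)"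
  proof (rule lens_eqI)
    show "FO (lcomp m (kpr1 i m)) x = FO (lcomp m (kpr2 i m)) x" for x
      by (auto simp: kpr1_def kpr2_def tr_Obj[OF i] kp_simps inv_f_f[OF i])
    show "FA (lcomp m (kpr1 i m)) x = FA (lcomp m (kpr2 i m)) x" for x
      by (auto simp: kpr1_def kpr2_def tr_Arr[OF i] kp_simps inv_f_f[OF i])
    show "Put (lcomp m (kpr1 i m)) x d = Put (lcomp m (kpr2 i m)) x d" for x d
    proof (cases "x \<in> i ` Obj (kp m)")
      case True
      then obtain a b where x: "x = i (a,b)" "a \<in> Obj (Src m)" "b \<in> Obj (Src m)" "FO m a = FO m b"
        by (auto simp: kp_simps)
      show ?thesis
      proof (cases "d \<in> Arr (Tgt m) \<and> Dom (Tgt m) d = FO m a")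
        case True
        have pa: "Put m a d \<in> Arr (Src m)" "Dom (Src m) (Put m a d) = a" "FA m (Put m a d) = d"
          using lens_Put[OF m x(2)] lens_Put_dom[OF m x(2)] lens_FA_Put[OF m x(2)] True by auto
        have pb: "Put m b d \<in> Arr (Src m)" "Dom (Src m) (Put m b d) = b" "FA m (Put m b d) = d"
          using lens_Put[OF m x(3)] lens_Put_dom[OF m x(3)] lens_FA_Put[OF m x(3)] True x(4) by auto
        show ?thesis using x True pa pb
          by (simp add: kpr1_def kpr2_def tr_Obj[OF i] kp_simps inv_f_f[OF i] inj_image_mem_iff[OF i])
      next
        case False
        then show ?thesis using x
          by (auto simp: kpr1_def kpr2_def tr_Obj[OF i] kp_simps inv_f_f[OF i] inj_image_mem_iff[OF i])
      qed
    next
      case False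
      then show ?thesis by (simp add: kpr1_def kpr2_def tr_Obj[OF i])
    qed
  qed (simp_all add: kpr1_def kpr2_def)
  have st: "Src (kpr1 i m) = Src (kpr2 i m)" "Tgt (kpr1 i m) = Src m" "Tgt (kpr2 i m) = Src m"
    by (simp_all add: kpr1_def kpr2_def)
  have all: "\<forall>f g. is_lens f \<and> is_lens g \<and> Src f = Src g \<and> Tgt f = Src m \<and> Tgt g = Src m \<and>
            lcomp m f = lcomp m g \<longrightarrow> f = g" using mo unfolding lens_mono_def by blast
  have "kpr1 i m = kpr2 i m"
    using spec[OF spec[OF all, of "kpr1 i m"], of "kpr2 i m"] l1 l2 eq st by blast
  then have FAe: "FA (kpr1 i m) = FA (kpr2 i m)" by simp
  show ?thesis
  proof (rule inj_onI)
    fix u v assume uv: "u \<in> Arr (Src m)" "v \<in> Arr (Src m)" "FA m u = FA m v"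
    have "FA (kpr1 i m) (i (u,v)) = FA (kpr2 i m) (i (u,v))" using FAe by simp
    then show "u = v" using uv by (simp add: kpr1_def kpr2_def kp_simps inj_image_mem_iff[OF i] inv_f_f[OF i])
  qed
qed



definition K2 :: "'u lens \<Rightarrow> ('u \<times> bool) cat" where
  "K2 e = \<lparr>Obj = {(x,b). x \<in> Obj (Tgt e) \<and> (x \<in> FO e ` Obj (Src e) \<longrightarrow> \<not> b)},
     Arr = {(u,b). u \<in> Arr (Tgt e) \<and> (Dom (Tgt e) u \<in> FO e ` Obj (Src e) \<longrightarrow> \<not> b)},
     Dom = (\<lambda>(u,b). (Dom (Tgt e) u, b)),
     Cod = (\<lambda>(u,b). (Cod (Tgt e) u, b \<and> Cod (Tgt e) u \<notin> FO e ` Obj (Src e))),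
     Idn = (\<lambda>(x,b). (Idn (Tgt e) x, b)),
     Comp = (\<lambda>(v,b') (u,b). (Comp (Tgt e) v u, b))\<rparr>"

lemma K2_simps:
  "(p \<in> Obj (K2 e)) = (fst p \<in> Obj (Tgt e) \<and> (fst p \<in> FO e ` Obj (Src e) \<longrightarrow> \<not> snd p))"
  "(p \<in> Arr (K2 e)) = (fst p \<in> Arr (Tgt e) \<and> (Dom (Tgt e) (fst p) \<in> FO e ` Obj (Src e) \<longrightarrow> \<not> snd p))"
  "Dom (K2 e) (u,b) = (Dom (Tgt e) u, b)"
  "Cod (K2 e) (u,b) = (Cod (Tgt e) u, b \<and> Cod (Tgt e) u \<notin> FO e ` Obj (Src e))"
  "Idn (K2 e) (x,b) = (Idn (Tgt e) x, b)"
  "Comp (K2 e) (v,b') (u,b) = (Comp (Tgt e) v u, b)"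
  by (auto simp: K2_def)

lemma K2_cat: assumes e: "is_lens e" and j: "inj j" shows "category (transp j (K2 e))"
proof -
  have B: "category (Tgt e)" using lens_tgt[OF e] .
  have cl: "\<And>u. u \<in> Arr (Tgt e) \<Longrightarrow> Dom (Tgt e) u \<in> FO e ` Obj (Src e) \<Longrightarrow> Cod (Tgt e) u \<in> FO e ` Obj (Src e)"
    using image_closed[OF e] by blast
  show ?thesis
  proof (rule transp_cat[OF j])
    fix f assume "f \<in> Arr (K2 e)"
    then show "Dom (K2 e) f \<in> Obj (K2 e)" "Cod (K2 e) f \<in> Obj (K2 e)"
      by (auto simp: K2_def cat_simps[OF B])
  next
    fix x assume "x \<in> Obj (K2 e)"
    then show "Idn (K2 e) x \<in> Arr (K2 e)" "Dom (K2 e) (Idn (K2 e) x) = x" "Cod (K2 e) (Idn (K2 e) x) = x"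
      by (auto simp: K2_def cat_simps[OF B])
  next
    fix f g assume "f \<in> Arr (K2 e)" "g \<in> Arr (K2 e)" "Cod (K2 e) f = Dom (K2 e) g"
    then show "Comp (K2 e) g f \<in> Arr (K2 e)" "Dom (K2 e) (Comp (K2 e) g f) = Dom (K2 e) f"
      "Cod (K2 e) (Comp (K2 e) g f) = Cod (K2 e) g"
      using cl apply (auto simp: K2_def cat_simps[OF B])
      apply (metis image_eqI)+
      done
  next
    fix f assume "f \<in> Arr (K2 e)"
    then show "Comp (K2 e) (Idn (K2 e) (Cod (K2 e) f)) f = f" "Comp (K2 e) f (Idn (K2 e) (Dom (K2 e) f)) = f"
      by (auto simp: K2_def cat_simps[OF B])
  next
    fix f g h assume "f \<in> Arr (K2 e)" "g \<in> Arr (K2 e)" "h \<in> Arr (K2 e)" "Cod (K2 e) f = Dom (K2 e) g" "Cod (K2 e) g = Dom (K2 e) h"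
    then show "Comp (K2 e) h (Comp (K2 e) g f) = Comp (K2 e) (Comp (K2 e) h g) f"
      by (auto simp: K2_def cat_assoc[OF B])
  qed
qed

definition dl :: "('u \<times> bool \<Rightarrow> 'u) \<Rightarrow> 'u lens \<Rightarrow> bool \<Rightarrow> 'u lens" where
  "dl j e b0 = \<lparr>Src = Tgt e, Tgt = transp j (K2 e),
     FO = (\<lambda>x. if x \<in> Obj (Tgt e) then j (x, b0 \<and> x \<notin> FO e ` Obj (Src e)) else undefined),
     FA = (\<lambda>u. if u \<in> Arr (Tgt e) then j (u, b0 \<and> Dom (Tgt e) u \<notin> FO e ` Obj (Src e)) else undefined),
     Put = (\<lambda>x k. if x \<in> Obj (Tgt e) \<and> k \<in> j ` Arr (K2 e) \<and>
                     Dom (transp j (K2 e)) k = j (x, b0 \<and> x \<notin> FO e ` Obj (Src e))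
                   then fst (inv j k) else undefined)\<rparr>"


lemma dl_lens: assumes e: "is_lens e" and j: "inj j" shows "is_lens (dl j e b0)"
proof -
  let ?S = "FO e ` Obj (Src e)"
  have B: "category (Tgt e)" using lens_tgt[OF e] .
  have cl: "\<And>u. u \<in> Arr (Tgt e) \<Longrightarrow> Dom (Tgt e) u \<in> ?S \<Longrightarrow> Cod (Tgt e) u \<in> ?S"
    using image_closed[OF e] by blast
  have tag: "(b0 \<and> Dom (Tgt e) u \<notin> ?S \<and> Cod (Tgt e) u \<notin> ?S) = (b0 \<and> Cod (Tgt e) u \<notin> ?S)"
    if "u \<in> Arr (Tgt e)" for u using cl[OF that] by blast
  note simps = dl_def tr_simps[OF j] K2_simps inj_image_mem_iff[OF j] inj_eq[OF j]
  show ?thesis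
  proof (rule lensI)
    show "category (Src (dl j e b0))" using B by (simp add: dl_def)
    show "category (Tgt (dl j e b0))" using K2_cat[OF e j] by (simp add: dl_def)
  next
    fix x assume x: "x \<in> Obj (Src (dl j e b0))"
    then have x': "x \<in> Obj (Tgt e)" by (simp add: dl_def)
    show "FO (dl j e b0) x \<in> Obj (Tgt (dl j e b0))" using x' by (simp add: simps)
    show "FA (dl j e b0) (Idn (Src (dl j e b0)) x) = Idn (Tgt (dl j e b0)) (FO (dl j e b0) x)"
      using x' cat_simps[OF B] by (simp add: simps)
    show "Put (dl j e b0) x (Idn (Tgt (dl j e b0)) (FO (dl j e b0) x)) = Idn (Src (dl j e b0)) x"
      using x' cat_simps[OF B] by (simp add: simps)
  next
    fix u assume u: "u \<in> Arr (Src (dl j e b0))"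
    then have u': "u \<in> Arr (Tgt e)" by (simp add: dl_def)
    show "FA (dl j e b0) u \<in> Arr (Tgt (dl j e b0))" using u' by (simp add: simps)
    show "Dom (Tgt (dl j e b0)) (FA (dl j e b0) u) = FO (dl j e b0) (Dom (Src (dl j e b0)) u)"
      using u' cat_simps[OF B] by (simp add: simps)
    show "Cod (Tgt (dl j e b0)) (FA (dl j e b0) u) = FO (dl j e b0) (Cod (Src (dl j e b0)) u)"
      using u' cat_simps[OF B] tag[OF u'] by (simp add: simps)
  next
    fix u v assume H: "u \<in> Arr (Src (dl j e b0))" "v \<in> Arr (Src (dl j e b0))" "Cod (Src (dl j e b0)) u = Dom (Src (dl j e b0)) v"
    then have u': "u \<in> Arr (Tgt e)" "v \<in> Arr (Tgt e)" "Cod (Tgt e) u = Dom (Tgt e) v" by (auto simp: dl_def)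
    show "FA (dl j e b0) (Comp (Src (dl j e b0)) v u) = Comp (Tgt (dl j e b0)) (FA (dl j e b0) v) (FA (dl j e b0) u)"
      using u' cat_simps[OF B] tag[OF u'(1)] by (simp add: simps)
  next
    fix x k assume H: "x \<in> Obj (Src (dl j e b0))" "k \<in> Arr (Tgt (dl j e b0))" "Dom (Tgt (dl j e b0)) k = FO (dl j e b0) x"
    then obtain w c where k: "k = j (w,c)" "(w,c) \<in> Arr (K2 e)" by (auto simp: dl_def tr_Arr[OF j])
    have x': "x \<in> Obj (Tgt e)" using H by (simp add: dl_def)
    have wc: "w \<in> Arr (Tgt e)" "Dom (Tgt e) w = x" "c = (b0 \<and> x \<notin> ?S)" using H k x' by (auto simp: simps)
    show "Put (dl j e b0) x k \<in> Arr (Src (dl j e b0))" using k wc x' by (simp add: simps)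
    show "Dom (Src (dl j e b0)) (Put (dl j e b0) x k) = x" using k wc x' by (simp add: simps)
    show "FA (dl j e b0) (Put (dl j e b0) x k) = k" using k wc x' by (simp add: simps)
  next
    fix x k k' assume H: "x \<in> Obj (Src (dl j e b0))" "k \<in> Arr (Tgt (dl j e b0))" "k' \<in> Arr (Tgt (dl j e b0))"
      "Dom (Tgt (dl j e b0)) k = FO (dl j e b0) x"
      "Dom (Tgt (dl j e b0)) k' = FO (dl j e b0) (Cod (Src (dl j e b0)) (Put (dl j e b0) x k))"
    then obtain w c w' c' where k: "k = j (w,c)" "(w,c) \<in> Arr (K2 e)" and k': "k' = j (w',c')" "(w',c') \<in> Arr (K2 e)"
      by (auto simp: dl_def tr_Arr[OF j])
    have x': "x \<in> Obj (Tgt e)" using H by (simp add: dl_def)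
    have wc: "w \<in> Arr (Tgt e)" "Dom (Tgt e) w = x" "c = (b0 \<and> x \<notin> ?S)" using H k x' by (auto simp: simps)
    have P1: "Put (dl j e b0) x k = w" using k wc x' by (simp add: simps)
    have cw: "Cod (Tgt e) w \<in> Obj (Tgt e)" using cat_cod[OF B wc(1)] .
    have wc': "w' \<in> Arr (Tgt e)" "Dom (Tgt e) w' = Cod (Tgt e) w" "c' = (b0 \<and> Cod (Tgt e) w \<notin> ?S)"
      using H(5) P1 k' cw by (auto simp: simps)
    have P2: "Put (dl j e b0) (Cod (Tgt e) w) k' = w'" using k' wc' cw by (simp add: simps)
    have cc: "Comp (Tgt (dl j e b0)) k' k = j (Comp (Tgt e) w' w, c)"
      using k k' wc wc' tag[OF wc(1)] by (auto simp: simps)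
    have P3: "Put (dl j e b0) x (j (Comp (Tgt e) w' w, c)) = Comp (Tgt e) w' w"
      using wc wc' x' cat_simps[OF B] by (simp add: simps)
    show "Put (dl j e b0) x (Comp (Tgt (dl j e b0)) k' k) =
       Comp (Src (dl j e b0)) (Put (dl j e b0) (Cod (Src (dl j e b0)) (Put (dl j e b0) x k)) k') (Put (dl j e b0) x k)"
      using P1 P2 P3 cc by (simp add: dl_def)
  next
    fix x assume "x \<notin> Obj (Src (dl j e b0))" then show "FO (dl j e b0) x = undefined" by (simp add: dl_def)
  next
    fix x assume "x \<notin> Arr (Src (dl j e b0))" then show "FA (dl j e b0) x = undefined" by (simp add: dl_def)
  next
    fix x b assume "\<not> (x \<in> Obj (Src (dl j e b0)) \<and> b \<in> Arr (Tgt (dl j e b0)) \<and> Dom (Tgt (dl j e b0)) b = FO (dl j e b0) x)"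
    then show "Put (dl j e b0) x b = undefined" by (auto simp: dl_def transp_def)
  qed
qed


lemma epi_surj:
  assumes inf: "infinite (UNIV :: 'u set)" and ep: "lens_epi (e :: 'u lens)"
  shows "FO e ` Obj (Src e) = Obj (Tgt e)"
proof -
  let ?S = "FO e ` Obj (Src e)"
  have e: "is_lens e" using ep by (simp add: lens_epi_def)
  obtain i :: "'u \<times> 'u \<Rightarrow> 'u" where i: "inj i" using inj_pair_exists[OF inf] by blast
  obtain c0 c1 :: 'u where c: "c0 \<noteq> c1"
  proof -
    have "UNIV \<noteq> {undefined::'u}"
    proof
      assume h: "UNIV = {undefined::'u}"
      show False using inf by (simp add: h)
    qed
    then obtain c1 :: 'u where "c1 \<noteq> undefined" by blast
    then show ?thesis using that by blast
  qed
  define j where "j = (\<lambda>(x, b::bool). i (x, if b then c1 else c0))"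
  have j: "inj j"
  proof (rule injI)
    fix p q assume "j p = j q"
    then have "(fst p, if snd p then c1 else c0) = (fst q, if snd q then c1 else c0)"
      using i by (cases p, cases q) (simp add: j_def inj_eq)
    then show "p = q" using c by (cases p, cases q) (auto split: if_splits)
  qed
  have l0: "is_lens (dl j e False)" and l1: "is_lens (dl j e True)" using dl_lens[OF e j] by auto
  have eq: "lcomp (dl j e False) e = lcomp (dl j e True) e"
  proof (rule lens_eqI)
    show "FO (lcomp (dl j e False) e) x = FO (lcomp (dl j e True) e) x" for x
      using lens_FO[OF e] by (auto simp: dl_def)
    show "FA (lcomp (dl j e False) e) x = FA (lcomp (dl j e True) e) x" for x
      using lens_FA[OF e] lens_FA_dom[OF e] cat_dom[OF lens_src[OF e]] by (auto simp: dl_def)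
    show "Put (lcomp (dl j e False) e) x c = Put (lcomp (dl j e True) e) x c" for x c
      using lens_FO[OF e] by (auto simp: dl_def)
  qed (simp_all add: dl_def)
  have all: "\<forall>f g. is_lens f \<and> is_lens g \<and> Src f = Tgt e \<and> Src g = Tgt e \<and> Tgt f = Tgt g \<and>
            lcomp f e = lcomp g e \<longrightarrow> f = g" using ep unfolding lens_epi_def by blast
  have st: "Src (dl j e False) = Tgt e" "Src (dl j e True) = Tgt e" "Tgt (dl j e False) = Tgt (dl j e True)"
    by (simp_all add: dl_def)
  have same: "dl j e False = dl j e True"
    using spec[OF spec[OF all, of "dl j e False"], of "dl j e True"] l0 l1 eq st by blast
  show ?thesis
  proof
    show "?S \<subseteq> Obj (Tgt e)" using lens_FO[OF e] by auto
    show "Obj (Tgt e) \<subseteq> ?S"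
    proof
      fix y assume y: "y \<in> Obj (Tgt e)"
      show "y \<in> ?S"
      proof (rule ccontr)
        assume n: "y \<notin> ?S"
        have "FO (dl j e False) y = FO (dl j e True) y" using same by simp
        then have "j (y, False) = j (y, True)" using y n by (simp add: dl_def)
        then show False using j by (simp add: inj_eq)
      qed
    qed
  qed
qed



lemma lift_exists:
  assumes e: "is_lens e" and su: "FO e ` Obj (Src e) = Obj (Tgt e)"
    and m: "is_lens m" and i: "inj_on (FA m) (Arr (Src m))"
    and f: "is_lens f" and g: "is_lens g"
    and sf: "Src f = Src e" and tf: "Tgt f = Src m" and sg: "Src g = Tgt e" and tg: "Tgt g = Tgt m"
    and sq: "lcomp g e = lcomp m f"
  shows "\<exists>h. is_lens h \<and> Src h = Tgt e \<and> Tgt h = Src m \<and> lcomp h e = f \<and> lcomp m h = g"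
proof -
  let ?A = "Src e" and ?B = "Tgt e" and ?C = "Src m" and ?D = "Tgt m"
  have A: "category ?A" using lens_src[OF e] .
  have B: "category ?B" using lens_tgt[OF e] .
  have C: "category ?C" using lens_src[OF m] .
  have D: "category ?D" using lens_tgt[OF m] .
  have sqO: "FO g (FO e x) = FO m (FO f x)" if "x \<in> Obj ?A" for x
  proof -
    have "FO (lcomp g e) x = FO (lcomp m f) x" using sq by simp
    then show ?thesis using that sf by simp
  qed
  have sqA: "FA g (FA e u) = FA m (FA f u)" if "u \<in> Arr ?A" for u
  proof -
    have "FA (lcomp g e) u = FA (lcomp m f) u" using sq by simp
    then show ?thesis using that sf by simp
  qed
  have sqP: "Put e x (Put g (FO e x) d) = Put f x (Put m (FO f x) d)"
    if "x \<in> Obj ?A" "d \<in> Arr ?D" "Dom ?D d = FO g (FO e x)" for x d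
  proof -
    have "Put (lcomp g e) x d = Put (lcomp m f) x d" using sq by simp
    then show ?thesis using that sf tg sqO[OF that(1)] by simp
  qed
  have putm: "Put m c d \<in> Arr ?C \<and> Dom ?C (Put m c d) = c \<and> FA m (Put m c d) = d"
    if "c \<in> Obj ?C" "d \<in> Arr ?D" "Dom ?D d = FO m c" for c d
    using lens_Put[OF m] lens_Put_dom[OF m] lens_FA_Put[OF m] that by auto
  have injO: "c = c'" if "c \<in> Obj ?C" "c' \<in> Obj ?C" "FO m c = FO m c'" for c c'
    using inj_obj[OF m i that] .
  define hO where "hO y = FO f (SOME a. a \<in> Obj ?A \<and> FO e a = y)" for y
  have hOk: "hO y \<in> Obj ?C \<and> FO m (hO y) = FO g y" if "y \<in> Obj ?B" for y
  proof -
    have "\<exists>a. a \<in> Obj ?A \<and> FO e a = y" using that su by (metis imageE)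
    then have a: "(SOME a. a \<in> Obj ?A \<and> FO e a = y) \<in> Obj ?A \<and> FO e (SOME a. a \<in> Obj ?A \<and> FO e a = y) = y"
      by (rule someI_ex)
    let ?a = "SOME a. a \<in> Obj ?A \<and> FO e a = y"
    have h1: "hO y = FO f ?a" by (simp add: hO_def)
    have h2: "FO f ?a \<in> Obj ?C" using lens_FO[OF f] a sf tf by auto
    have h3: "FO m (FO f ?a) = FO g y" using sqO[of ?a] a by simp
    show ?thesis using h1 h2 h3 by simp
  qed
  have hOe: "hO (FO e x) = FO f x" if "x \<in> Obj ?A" for x
  proof -
    have ex: "FO e x \<in> Obj ?B" using lens_FO[OF e that] .
    have fx: "FO f x \<in> Obj ?C" using lens_FO[OF f, of x] that sf tf by simp
    show ?thesis by (rule injO) (use hOk[OF ex] sqO[OF that] fx in auto)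
  qed
  define h where "h = \<lparr>Src = ?B, Tgt = ?C, FO = (\<lambda>y. if y \<in> Obj ?B then hO y else undefined),
    FA = (\<lambda>u. if u \<in> Arr ?B then Put m (hO (Dom ?B u)) (FA g u) else undefined),
    Put = (\<lambda>y c. if y \<in> Obj ?B \<and> c \<in> Arr ?C \<and> Dom ?C c = hO y then Put g y (FA m c) else undefined)\<rparr>"
  have gu: "FA g u \<in> Arr ?D \<and> Dom ?D (FA g u) = FO m (hO (Dom ?B u)) \<and> Cod ?D (FA g u) = FO m (hO (Cod ?B u))"
    if "u \<in> Arr ?B" for u
    using lens_FA[OF g] lens_FA_dom[OF g] lens_FA_cod[OF g] hOk cat_dom[OF B] cat_cod[OF B] that sg tg by simp
  have hA: "Put m (hO (Dom ?B u)) (FA g u) \<in> Arr ?C \<and> Dom ?C (Put m (hO (Dom ?B u)) (FA g u)) = hO (Dom ?B u)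
      \<and> FA m (Put m (hO (Dom ?B u)) (FA g u)) = FA g u \<and> Cod ?C (Put m (hO (Dom ?B u)) (FA g u)) = hO (Cod ?B u)"
    if u: "u \<in> Arr ?B" for u
  proof -
    have 1: "Put m (hO (Dom ?B u)) (FA g u) \<in> Arr ?C \<and> Dom ?C (Put m (hO (Dom ?B u)) (FA g u)) = hO (Dom ?B u)
      \<and> FA m (Put m (hO (Dom ?B u)) (FA g u)) = FA g u"
      using putm[of "hO (Dom ?B u)" "FA g u"] gu[OF u] hOk cat_dom[OF B u] by blast
    have "FO m (Cod ?C (Put m (hO (Dom ?B u)) (FA g u))) = FO m (hO (Cod ?B u))"
      using lens_FA_cod[OF m, of "Put m (hO (Dom ?B u)) (FA g u)"] 1 gu[OF u] by simp
    then have "Cod ?C (Put m (hO (Dom ?B u)) (FA g u)) = hO (Cod ?B u)"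
      using injO cat_cod[OF C] 1 hOk cat_cod[OF B u] by blast
    then show ?thesis using 1 by blast
  qed
  have hP: "Put g y (FA m c) \<in> Arr ?B \<and> Dom ?B (Put g y (FA m c)) = y \<and> FA g (Put g y (FA m c)) = FA m c"
    if "y \<in> Obj ?B" "c \<in> Arr ?C" "Dom ?C c = hO y" for y c
  proof -
    have "FA m c \<in> Arr ?D" "Dom ?D (FA m c) = FO g y"
      using lens_FA[OF m that(2)] lens_FA_dom[OF m that(2)] that hOk by auto
    then show ?thesis using lens_Put[OF g] lens_Put_dom[OF g] lens_FA_Put[OF g] that sg tg by auto
  qed
  have hl: "is_lens h"
  proof (rule lensI)
    show "category (Src h)" "category (Tgt h)" using B C by (simp_all add: h_def)
  next
    fix y assume "y \<in> Obj (Src h)"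
    then have y: "y \<in> Obj ?B" by (simp add: h_def)
    show "FO h y \<in> Obj (Tgt h)" using hOk[OF y] y by (simp add: h_def)
    have "FA g (Idn ?B y) = Idn ?D (FO m (hO y))" using lens_FA_idn[OF g] y hOk[OF y] sg tg by simp
    then show "FA h (Idn (Src h) y) = Idn (Tgt h) (FO h y)"
      using y cat_idn[OF B y] cat_idn_dom[OF B y] lens_Put_idn[OF m conjunct1[OF hOk[OF y]]] hOk[OF y] by (simp add: h_def)
    have "FA m (Idn ?C (hO y)) = Idn ?D (FO g y)" using lens_FA_idn[OF m] hOk[OF y] by simp
    then show "Put h y (Idn (Tgt h) (FO h y)) = Idn (Src h) y"
      using y hOk[OF y] cat_idn[OF C] cat_idn_dom[OF C] lens_Put_idn[OF g] sg tg by (simp add: h_def)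
  next
    fix u assume "u \<in> Arr (Src h)"
    then have u: "u \<in> Arr ?B" by (simp add: h_def)
    show "FA h u \<in> Arr (Tgt h)" "Dom (Tgt h) (FA h u) = FO h (Dom (Src h) u)"
      "Cod (Tgt h) (FA h u) = FO h (Cod (Src h) u)"
      using hA[OF u] u cat_dom[OF B u] cat_cod[OF B u] by (simp_all add: h_def)
  next
    fix u v assume "u \<in> Arr (Src h)" "v \<in> Arr (Src h)" "Cod (Src h) u = Dom (Src h) v"
    then have uv: "u \<in> Arr ?B" "v \<in> Arr ?B" "Cod ?B u = Dom ?B v" by (simp_all add: h_def)
    have cm: "Comp ?B v u \<in> Arr ?B" "Dom ?B (Comp ?B v u) = Dom ?B u" using cat_comp[OF B uv] cat_comp_dom[OF B uv] by auto
    have fg: "FA g (Comp ?B v u) = Comp ?D (FA g v) (FA g u)" using lens_FA_comp[OF g] uv sg tg by simp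
    have "Put m (hO (Dom ?B u)) (Comp ?D (FA g v) (FA g u)) =
       Comp ?C (Put m (Cod ?C (Put m (hO (Dom ?B u)) (FA g u))) (FA g v)) (Put m (hO (Dom ?B u)) (FA g u))"
      using lens_Put_comp[OF m, of "hO (Dom ?B u)" "FA g u" "FA g v"] hOk cat_dom[OF B uv(1)] gu uv hA by simp
    then show "FA h (Comp (Src h) v u) = Comp (Tgt h) (FA h v) (FA h u)"
      using uv cm fg hA by (simp add: h_def)
  next
    fix y c assume "y \<in> Obj (Src h)" "c \<in> Arr (Tgt h)" "Dom (Tgt h) c = FO h y"
    then have yc: "y \<in> Obj ?B" "c \<in> Arr ?C" "Dom ?C c = hO y" by (simp_all add: h_def)
    show "Put h y c \<in> Arr (Src h)" "Dom (Src h) (Put h y c) = y" using hP[OF yc] yc by (simp_all add: h_def)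
    have "Put m (hO y) (FA m c) = c" using inj_put'[OF m i yc(2,3)] .
    then show "FA h (Put h y c) = c" using hP[OF yc] yc by (simp add: h_def)
  next
    fix y c c' assume H: "y \<in> Obj (Src h)" "c \<in> Arr (Tgt h)" "c' \<in> Arr (Tgt h)" "Dom (Tgt h) c = FO h y"
      "Dom (Tgt h) c' = FO h (Cod (Src h) (Put h y c))"
    then have yc: "y \<in> Obj ?B" "c \<in> Arr ?C" "Dom ?C c = hO y" by (simp_all add: h_def)
    have P1: "Put h y c = Put g y (FA m c)" using yc by (simp add: h_def)
    let ?y2 = "Cod ?B (Put g y (FA m c))"
    have y2: "?y2 \<in> Obj ?B" using cat_cod[OF B] hP[OF yc] by blast
    have c': "c' \<in> Arr ?C" "Dom ?C c' = hO ?y2" using H(3,5) P1 y2 by (simp_all add: h_def)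
    have P2: "Put h ?y2 c' = Put g ?y2 (FA m c')" using y2 c' by (simp add: h_def)
    have ccod: "Cod ?C c = Dom ?C c'"
    proof -
      have "FO m (Cod ?C c) = Cod ?D (FA m c)" using lens_FA_cod[OF m yc(2)] by simp
      also have "... = FO g ?y2" using lens_FA_cod[OF g, of "Put g y (FA m c)"] hP[OF yc] sg tg by simp
      also have "... = FO m (Dom ?C c')" using hOk[OF y2] c' by simp
      finally show ?thesis using injO cat_cod[OF C yc(2)] cat_dom[OF C c'(1)] by blast
    qed
    have cc: "Comp ?C c' c \<in> Arr ?C" "Dom ?C (Comp ?C c' c) = hO y"
      using cat_comp[OF C yc(2) c'(1) ccod] cat_comp_dom[OF C yc(2) c'(1) ccod] yc by auto
    have P3: "Put h y (Comp ?C c' c) = Put g y (FA m (Comp ?C c' c))" using yc cc by (simp add: h_def)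
    have fm: "FA m (Comp ?C c' c) = Comp ?D (FA m c') (FA m c)" using lens_FA_comp[OF m yc(2) c'(1) ccod] .
    have d1: "FA m c \<in> Arr (Tgt g)" "Dom (Tgt g) (FA m c) = FO g y"
      using lens_FA[OF m yc(2)] lens_FA_dom[OF m yc(2)] yc hOk tg by auto
    have d2: "FA m c' \<in> Arr (Tgt g)" "Dom (Tgt g) (FA m c') = FO g ?y2"
      using lens_FA[OF m c'(1)] lens_FA_dom[OF m c'(1)] c' hOk[OF y2] tg by auto
    have "Put g y (Comp ?D (FA m c') (FA m c)) = Comp ?B (Put g ?y2 (FA m c')) (Put g y (FA m c))"
      using lens_Put_comp[OF g, of y "FA m c" "FA m c'"] yc d1 d2 sg tg by simp
    then show "Put h y (Comp (Tgt h) c' c) = Comp (Src h) (Put h (Cod (Src h) (Put h y c)) c') (Put h y c)"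
      using P1 P2 P3 fm by (simp add: h_def)
  next
    fix x assume "x \<notin> Obj (Src h)" then show "FO h x = undefined" by (simp add: h_def)
  next
    fix x assume "x \<notin> Arr (Src h)" then show "FA h x = undefined" by (simp add: h_def)
  next
    fix x b assume "\<not> (x \<in> Obj (Src h) \<and> b \<in> Arr (Tgt h) \<and> Dom (Tgt h) b = FO h x)"
    then show "Put h x b = undefined" by (auto simp: h_def)
  qed
  have c1: "lcomp h e = f"
  proof (rule lens_eqI)
    show "Src (lcomp h e) = Src f" "Tgt (lcomp h e) = Tgt f" using sf tf by (simp_all add: h_def)
    show "FO (lcomp h e) x = FO f x" for x
      using hOe lens_FO[OF e] lens_FO_ext[OF f] sf by (simp add: h_def)
    show "FA (lcomp h e) u = FA f u" for u
    proof (cases "u \<in> Arr ?A")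
      case True
      have "Put m (FO f (Dom ?A u)) (FA m (FA f u)) = FA f u"
        using inj_put'[OF m i, of "FA f u"] lens_FA[OF f, of u] lens_FA_dom[OF f, of u] True sf tf by simp
      then show ?thesis using True lens_FA[OF e True] lens_FA_dom[OF e True] hOe cat_dom[OF A True] sqA[OF True]
        by (simp add: h_def)
    next
      case False then show ?thesis using lens_FA_ext[OF f] sf by simp
    qed
    show "Put (lcomp h e) x c = Put f x c" for x c
    proof (cases "x \<in> Obj ?A \<and> c \<in> Arr ?C \<and> Dom ?C c = FO f x")
      case True
      have ex: "FO e x \<in> Obj ?B" using lens_FO[OF e] True by simp
      have d: "FA m c \<in> Arr ?D" "Dom ?D (FA m c) = FO g (FO e x)"
        using lens_FA[OF m] lens_FA_dom[OF m] True sqO by auto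
      have "Put e x (Put g (FO e x) (FA m c)) = Put f x c"
        using sqP[OF _ d] True inj_put'[OF m i] by simp
      then show ?thesis using True ex hOe by (simp add: h_def)
    next
      case False
      then show ?thesis using lens_Put_ext[OF f, of x c] hOe lens_FO[OF e] sf tf by (auto simp: h_def)
    qed
  qed
  have c2: "lcomp m h = g"
  proof (rule lens_eqI)
    show "Src (lcomp m h) = Src g" "Tgt (lcomp m h) = Tgt g" using sg tg by (simp_all add: h_def)
    show "FO (lcomp m h) x = FO g x" for x
      using hOk lens_FO_ext[OF g] sg by (simp add: h_def)
    show "FA (lcomp m h) u = FA g u" for u
      using hA lens_FA_ext[OF g] sg by (simp add: h_def)
    show "Put (lcomp m h) y d = Put g y d" for y d
    proof (cases "y \<in> Obj ?B \<and> d \<in> Arr ?D \<and> Dom ?D d = FO g y")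
      case True
      have "Put m (hO y) d \<in> Arr ?C \<and> Dom ?C (Put m (hO y) d) = hO y \<and> FA m (Put m (hO y) d) = d"
        using putm hOk True by auto
      then show ?thesis using True hOk by (simp add: h_def)
    next
      case False
      then show ?thesis using lens_Put_ext[OF g, of y d] hOk sg tg by (auto simp: h_def)
    qed
  qed
  have "Src h = Tgt e" "Tgt h = Src m" by (simp_all add: h_def)
  then show ?thesis using hl c1 c2 by blast
qed


theorem corollary6p6:
  fixes e :: "'u lens"
  assumes "infinite (UNIV :: 'u set)"
    and "is_lens e"
  shows "(\<forall>m. lens_mono m \<longrightarrow> left_orth e m) \<longleftrightarrow> lens_epi e"
proof
  assume H: "\<forall>m. lens_mono m \<longrightarrow> left_orth e m"
  show "lens_epi e" using surj_epi[OF assms(2) ortho_surj[OF assms(2) H]] .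
next
  assume ep: "lens_epi e"
  have su: "FO e ` Obj (Src e) = Obj (Tgt e)" using epi_surj[OF assms(1) ep] .
  have all: "\<forall>f g. is_lens f \<and> is_lens g \<and> Src f = Tgt e \<and> Src g = Tgt e \<and> Tgt f = Tgt g \<and>
            lcomp f e = lcomp g e \<longrightarrow> f = g" using ep unfolding lens_epi_def by blast
  show "\<forall>m. lens_mono m \<longrightarrow> left_orth e m"
  proof (intro allI impI)
    fix m :: "'u lens" assume mo: "lens_mono m"
    have m: "is_lens m" using mo by (simp add: lens_mono_def)
    have i: "inj_on (FA m) (Arr (Src m))" using mono_inj[OF assms(1) mo] .
    show "left_orth e m"
      unfolding left_orth_def
    proof (intro conjI allI impI)
      show "is_lens e" "is_lens m" by fact+
      fix f g
      assume H: "is_lens f \<and> is_lens g \<and> Src f = Src e \<and> Tgt f = Src m \<and>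
            Src g = Tgt e \<and> Tgt g = Tgt m \<and> lcomp g e = lcomp m f"
      then obtain h where h: "is_lens h \<and> Src h = Tgt e \<and> Tgt h = Src m \<and> lcomp h e = f \<and> lcomp m h = g"
        using lift_exists[OF assms(2) su m i] by blast
      show "\<exists>!h. is_lens h \<and> Src h = Tgt e \<and> Tgt h = Src m \<and> lcomp h e = f \<and> lcomp m h = g"
      proof (rule ex1I[of _ h])
        show "is_lens h \<and> Src h = Tgt e \<and> Tgt h = Src m \<and> lcomp h e = f \<and> lcomp m h = g" by fact
        fix h' assume h': "is_lens h' \<and> Src h' = Tgt e \<and> Tgt h' = Src m \<and> lcomp h' e = f \<and> lcomp m h' = g"
        show "h' = h" using spec[OF spec[OF all, of h'], of h] h h' by auto
      qed
    qed
  qed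
qed

end
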